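(* Let $A,B\in\mathrm{SL}_2\mathbb{Z}$ be noncommuting, well oriented, with $2\le\mathrm{tr}(A)<\mathrm{tr}(B)$. Then for all words $w,u$ (possibly empty): (1) $[w]<[u]$ if and only if $[w]\le[u]-1$; (2) if $u$ is a subword of $w$, then $[u]<[w]$, except in the case in which $A$ is parabolic and $w$ is a power of $a$.
   Context: Words are finite (possibly empty) strings over $\{a,b\}$; $\phi$ is the monoid homomorphism with $\phi(a)=A$, $\phi(b)=B$, and $[w]=\mathrm{tr}(\phi(w))$ (so the empty word has $[\,]=2$). A subword of $w$ is a possibly empty word obtained from $w$ by deleting one or more not necessarily contiguous letters. $A$ is parabolic if $\mathrm{tr}(A)=2$. Fixed points are for the Möbius action on $\partial\mathcal{H}=\mathbb{P}^1\mathbb{R}$; $\alpha^\pm$ ($\beta^\pm$) are the attracting/repelling fixed points of $A$ ($B$), both equal to the unique fixed point if parabolic. With $\partial\mathcal{H}$ cyclically ordered and $[\alpha,\beta]$ the closed counterclockwise interval from $\alpha$ to $\beta$, let $I^+=\{\alpha^+\}$ if $\alpha^+=\beta^+$, and otherwise the one of $[\alpha^+,\beta^+],[\beta^+,\alpha^+]$ mapped into itself by both $A$ and $B$ (if it exists); define $I^-$ likewise with $A^{-1},B^{-1},\alpha^-,\beta^-$. The pair is coherently oriented if both exist, and well oriented if $A,B$ is coherently oriented but $A,B^{-1}$ is not. *)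

theory Defs
  imports "HOL-Analysis.Analysis" "HOL-Library.Sublist"
begin

section \<open>Words and the trace map\<close>

datatype letter = La | Lb

type_synonym word = "letter list"

definition letter_mat :: "int^2^2 \<Rightarrow> int^2^2 \<Rightarrow> letter \<Rightarrow> int^2^2" where
  "letter_mat A B l = (case l of La \<Rightarrow> A | Lb \<Rightarrow> B)"

text \<open>The monoid homomorphism phi with phi(a)=A, phi(b)=B (empty word goes to identity).\<close>
definition phi :: "int^2^2 \<Rightarrow> int^2^2 \<Rightarrow> word \<Rightarrow> int^2^2" where
  "phi A B w = foldr (\<lambda>l M. letter_mat A B l ** M) w (mat 1)"

text \<open>[w] = tr(phi(w)).\<close>
definition trw :: "int^2^2 \<Rightarrow> int^2^2 \<Rightarrow> word \<Rightarrow> int" where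
  "trw A B w = trace (phi A B w)"

section \<open>SL2(Z) and inverses\<close>

definition SL2Z :: "int^2^2 \<Rightarrow> bool" where
  "SL2Z M \<longleftrightarrow> det M = 1"

text \<open>Inverse of a determinant-one 2x2 matrix (the adjugate).\<close>
definition inv2 :: "int^2^2 \<Rightarrow> int^2^2" where
  "inv2 M = (\<chi> i j. if i = 1 \<and> j = 1 then M$2$2 else if i = 1 \<and> j = 2 then - M$1$2
                  else if i = 2 \<and> j = 1 then - M$2$1 else M$1$1)"

section \<open>The real projective line and the Moebius action\<close>

datatype proj = Fin real | Inf

definition mob :: "int^2^2 \<Rightarrow> proj \<Rightarrow> proj" where
  "mob M z = (let p = real_of_int (M$1$1); q = real_of_int (M$1$2);
                  r = real_of_int (M$2$1); s = real_of_int (M$2$2) in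
     (case z of
        Fin x \<Rightarrow> (if r * x + s \<noteq> 0 then Fin ((p * x + q) / (r * x + s)) else Inf)
      | Inf \<Rightarrow> (if r \<noteq> 0 then Fin (p / r) else Inf)))"

text \<open>Convergence of sequences in P^1(R) (one-point compactification of R).\<close>
definition pconv :: "(nat \<Rightarrow> proj) \<Rightarrow> proj \<Rightarrow> bool" where
  "pconv f z = (case z of
      Fin x \<Rightarrow> (\<forall>e>0. \<exists>N. \<forall>n\<ge>N. \<exists>t. f n = Fin t \<and> \<bar>t - x\<bar> < e)
    | Inf \<Rightarrow> (\<forall>K. \<exists>N. \<forall>n\<ge>N. f n = Inf \<or> (\<exists>t. f n = Fin t \<and> \<bar>t\<bar> > K)))"

text \<open>Attracting fixed point: the fixed point to which the forward orbit of every
  non-fixed point converges (for parabolic M this is the unique fixed point).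
  Repelling fixed point: attracting fixed point of the inverse.\<close>
definition att_fp :: "int^2^2 \<Rightarrow> proj" where
  "att_fp M = (THE x. mob M x = x \<and>
       (\<forall>y. mob M y \<noteq> y \<longrightarrow> pconv (\<lambda>n. (mob M ^^ n) y) x))"

definition rep_fp :: "int^2^2 \<Rightarrow> proj" where
  "rep_fp M = att_fp (inv2 M)"

text \<open>Closed counterclockwise interval from x to y on the boundary circle
  (counterclockwise = increasing along R, then through infinity).\<close>
fun ccw_int :: "proj \<Rightarrow> proj \<Rightarrow> proj set" where
  "ccw_int (Fin x) (Fin y) =
     (if x \<le> y then {Fin t | t. x \<le> t \<and> t \<le> y}
      else insert Inf {Fin t | t. x \<le> t \<or> t \<le> y})"
| "ccw_int (Fin x) Inf = insert Inf {Fin t | t. x \<le> t}"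
| "ccw_int Inf (Fin y) = insert Inf {Fin t | t. t \<le> y}"
| "ccw_int Inf Inf = {Inf}"

definition invariant2 :: "int^2^2 \<Rightarrow> int^2^2 \<Rightarrow> proj set \<Rightarrow> bool" where
  "invariant2 A B I \<longleftrightarrow> mob A ` I \<subseteq> I \<and> mob B ` I \<subseteq> I"

text \<open>Existence of I^+ (resp. I^-): either the attracting (repelling) fixed points
  coincide, or one of the two closed arcs between them is mapped into itself by
  both A and B (resp. A^-1 and B^-1).\<close>
definition Iplus_exists :: "int^2^2 \<Rightarrow> int^2^2 \<Rightarrow> bool" where
  "Iplus_exists A B \<longleftrightarrow> att_fp A = att_fp B \<or>
     invariant2 A B (ccw_int (att_fp A) (att_fp B)) \<or>
     invariant2 A B (ccw_int (att_fp B) (att_fp A))"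

definition Iminus_exists :: "int^2^2 \<Rightarrow> int^2^2 \<Rightarrow> bool" where
  "Iminus_exists A B \<longleftrightarrow> rep_fp A = rep_fp B \<or>
     invariant2 (inv2 A) (inv2 B) (ccw_int (rep_fp A) (rep_fp B)) \<or>
     invariant2 (inv2 A) (inv2 B) (ccw_int (rep_fp B) (rep_fp A))"

definition coherently_oriented :: "int^2^2 \<Rightarrow> int^2^2 \<Rightarrow> bool" where
  "coherently_oriented A B \<longleftrightarrow> Iplus_exists A B \<and> Iminus_exists A B"

definition well_oriented :: "int^2^2 \<Rightarrow> int^2^2 \<Rightarrow> bool" where
  "well_oriented A B \<longleftrightarrow> coherently_oriented A B \<and> \<not> coherently_oriented A (inv2 B)"

definition parabolic :: "int^2^2 \<Rightarrow> bool" where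
  "parabolic M \<longleftrightarrow> trace M = 2"

end

theory Submission
  imports Defs
begin

(* ---- from T1.thy ---- *)


definition R :: "int^2^2 \<Rightarrow> real^2^2" where "R M = (\<chi> i j. real_of_int (M$i$j))"
definition vec2 :: "real \<Rightarrow> real \<Rightarrow> real^2" where "vec2 a b = vector [a,b]"
definition vecp :: "proj \<Rightarrow> real^2" where
  "vecp z = (case z of Fin x \<Rightarrow> vec2 x 1 | Inf \<Rightarrow> vec2 1 0)"
definition pt :: "real^2 \<Rightarrow> proj" where "pt u = (if u$2 \<noteq> 0 then Fin (u$1/u$2) else Inf)"
definition mobR :: "real^2^2 \<Rightarrow> proj \<Rightarrow> proj" where "mobR X z = pt (X *v vecp z)"
definition d2 :: "real^2 \<Rightarrow> real^2 \<Rightarrow> real" where "d2 u v = u$1 * v$2 - u$2 * v$1"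

lemma vec2_nth[simp]: "vec2 a b $ 1 = a" "vec2 a b $ 2 = b"
  by (simp_all add: vec2_def)

lemma v2_eq: "(u::'a^2) = v \<longleftrightarrow> u$1 = v$1 \<and> u$2 = v$2"
  by (metis exhaust_2 vec_eq_iff)

lemma m2_eq: "(X::'a^2^2) = Y \<longleftrightarrow> X$1$1 = Y$1$1 \<and> X$1$2 = Y$1$2 \<and> X$2$1 = Y$2$1 \<and> X$2$2 = Y$2$2"
  by (metis v2_eq)

lemma mv_nth[simp]: "((X::'a::comm_semiring_1^2^2) *v u)$i = X$i$1 * u$1 + X$i$2 * u$2"
  by (simp add: matrix_vector_mult_def sum_2)

lemma mm_nth[simp]: "((X::'a::comm_semiring_1^2^2) ** Y)$i$j = X$i$1 * Y$1$j + X$i$2 * Y$2$j"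
  by (simp add: matrix_matrix_mult_def sum_2)

lemma trace2: "trace (X::'a::comm_semiring_1^2^2) = X$1$1 + X$2$2"
  by (simp add: trace_def sum_2)

lemma R_nth[simp]: "R M $ i $ j = real_of_int (M$i$j)"
  by (simp add: R_def)

lemma R_mult: "R (M ** N) = R M ** R N"
  by (simp add: m2_eq)

lemma mob_R: "mob M = mobR (R M)"
  by (auto simp: fun_eq_iff mob_def mobR_def pt_def vecp_def Let_def split: proj.splits)


lemma vnz: "(u::real^2) \<noteq> 0 \<longleftrightarrow> u$1 \<noteq> 0 \<or> u$2 \<noteq> 0"
  by (auto simp: v2_eq)

lemma pt_scale: "c \<noteq> 0 \<Longrightarrow> pt (c *s u) = pt u"
  by (simp add: pt_def)

lemma pt_vecp[simp]: "pt (vecp z) = z"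
  by (cases z) (auto simp: pt_def vecp_def)

lemma vecp_nz[simp]: "vecp z \<noteq> 0"
  by (cases z) (auto simp: vnz vecp_def)

lemma vecp_pt: "u \<noteq> 0 \<Longrightarrow> \<exists>c. c \<noteq> 0 \<and> vecp (pt u) = c *s u"
proof -
  assume u: "u \<noteq> 0"
  show ?thesis
  proof (cases "u$2 = 0")
    case True
    then have "u$1 \<noteq> 0" using u by (simp add: vnz)
    then show ?thesis using True
      by (intro exI[of _ "1/u$1"]) (auto simp: pt_def vecp_def v2_eq)
  next
    case False
    then show ?thesis
      by (intro exI[of _ "1/u$2"]) (auto simp: pt_def vecp_def v2_eq)
  qed
qed

lemma mobR_pt: "u \<noteq> 0 \<Longrightarrow> mobR X (pt u) = pt (X *v u)"
proof -
  assume "u \<noteq> 0"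
  then obtain c where "c \<noteq> 0" "vecp (pt u) = c *s u" using vecp_pt by blast
  moreover have "X *v (c *s u) = c *s (X *v u)" by (simp add: v2_eq algebra_simps)
  ultimately show ?thesis
    by (simp add: mobR_def pt_scale)
qed


lemma pt_eq_iff: "u \<noteq> 0 \<Longrightarrow> v \<noteq> 0 \<Longrightarrow> pt u = pt v \<longleftrightarrow> d2 u v = 0"
  apply (auto simp: pt_def d2_def vnz field_simps split: if_splits)
  done

lemma d2_mv: "d2 (X *v u) (X *v v) = det X * d2 u v"
  by (simp add: d2_def det_2 algebra_simps)

lemma d2_anti: "d2 u v = - d2 v u"
  by (simp add: d2_def)

lemma mv_zero_iff: "det (X::real^2^2) \<noteq> 0 \<Longrightarrow> X *v u = 0 \<longleftrightarrow> u = 0"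
proof
  assume d: "det X \<noteq> 0" and h: "X *v u = 0"
  have e1: "X$1$1 * u$1 + X$1$2 * u$2 = 0" "X$2$1 * u$1 + X$2$2 * u$2 = 0"
    using h by (simp_all add: v2_eq)
  have "det X * u$1 = X$2$2 * (X$1$1 * u$1 + X$1$2 * u$2) - X$1$2 * (X$2$1 * u$1 + X$2$2 * u$2)"
    by (simp add: det_2 algebra_simps)
  moreover have "det X * u$2 = X$1$1 * (X$2$1 * u$1 + X$2$2 * u$2) - X$2$1 * (X$1$1 * u$1 + X$1$2 * u$2)"
    by (simp add: det_2 algebra_simps)
  ultimately have "det X * u$1 = 0" "det X * u$2 = 0" using e1 by simp_all
  then show "u = 0" using d by (simp add: v2_eq)
qed simp

definition Xpow :: "real^2^2 \<Rightarrow> nat \<Rightarrow> real^2 \<Rightarrow> real^2" where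
  "Xpow X n = ((\<lambda>u. X *v u) ^^ n)"

lemma Xpow_0[simp]: "Xpow X 0 u = u" by (simp add: Xpow_def)
lemma Xpow_Suc[simp]: "Xpow X (Suc n) u = X *v Xpow X n u" by (simp add: Xpow_def)

lemma Xpow_nz: "det X \<noteq> 0 \<Longrightarrow> u \<noteq> 0 \<Longrightarrow> Xpow X n u \<noteq> 0"
  by (induction n) (simp_all add: mv_zero_iff)

lemma orbit: "det X \<noteq> 0 \<Longrightarrow> (mobR X ^^ n) z = pt (Xpow X n (vecp z))"
proof (induction n)
  case 0 then show ?case by simp
next
  case (Suc n)
  then show ?case using Xpow_nz[OF Suc.prems vecp_nz] by (simp add: mobR_pt)
qed

lemma pconv_unique: "pconv f x \<Longrightarrow> pconv f y \<Longrightarrow> x = y"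
proof (cases x; cases y)
  fix a b assume fx: "pconv f x" and fy: "pconv f y" and xa: "x = Fin a" and yb: "y = Fin b"
  show "x = y"
  proof (rule ccontr)
    assume "x \<noteq> y"
    then have ab: "\<bar>a - b\<bar> / 2 > 0" using xa yb by auto
    from fx xa have P1: "\<forall>e>0. \<exists>N. \<forall>n\<ge>N. \<exists>t. f n = Fin t \<and> \<bar>t - a\<bar> < e" by (simp add: pconv_def)
    from fy yb have P2: "\<forall>e>0. \<exists>N. \<forall>n\<ge>N. \<exists>t. f n = Fin t \<and> \<bar>t - b\<bar> < e" by (simp add: pconv_def)
    obtain N1 where N1: "\<forall>n\<ge>N1. \<exists>t. f n = Fin t \<and> \<bar>t - a\<bar> < \<bar>a - b\<bar> / 2"
      using P1[rule_format, OF ab] by blast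
    obtain N2 where N2: "\<forall>n\<ge>N2. \<exists>t. f n = Fin t \<and> \<bar>t - b\<bar> < \<bar>a - b\<bar> / 2"
      using P2[rule_format, OF ab] by blast
    obtain t1 where t1: "f (max N1 N2) = Fin t1" "\<bar>t1 - a\<bar> < \<bar>a - b\<bar> / 2" using N1[rule_format, of "max N1 N2"] by auto
    obtain t2 where t2: "f (max N1 N2) = Fin t2" "\<bar>t2 - b\<bar> < \<bar>a - b\<bar> / 2" using N2[rule_format, of "max N1 N2"] by auto
    from t1 t2 have "t1 = t2" by auto
    with t1(2) t2(2) show False by (simp add: abs_if split: if_split_asm)
  qed
next
  fix a assume fx: "pconv f x" and fy: "pconv f y" and xa: "x = Fin a" and yb: "y = Inf"
  have "\<forall>e>0. \<exists>N. \<forall>n\<ge>N. \<exists>t. f n = Fin t \<and> \<bar>t - a\<bar> < e"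
    using fx xa by (simp add: pconv_def)
  then obtain N1 where N1: "\<forall>n\<ge>N1. \<exists>t. f n = Fin t \<and> \<bar>t - a\<bar> < 1"
    using zero_less_one by blast
  have "\<forall>K. \<exists>N. \<forall>n\<ge>N. f n = Inf \<or> (\<exists>t. f n = Fin t \<and> \<bar>t\<bar> > K)"
    using fy yb by (simp add: pconv_def)
  then obtain N2 where N2: "\<forall>n\<ge>N2. f n = Inf \<or> (\<exists>t. f n = Fin t \<and> \<bar>t\<bar> > \<bar>a\<bar> + 1)"
    by blast
  obtain t1 where t1: "f (max N1 N2) = Fin t1" "\<bar>t1 - a\<bar> < 1" using N1[rule_format, of "max N1 N2"] by auto
  from N2[rule_format, of "max N1 N2"] t1 have "\<bar>t1\<bar> > \<bar>a\<bar> + 1" by auto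
  with t1(2) show "x = y" by (simp add: abs_if split: if_split_asm)
next
  fix b assume fx: "pconv f x" and fy: "pconv f y" and xa: "x = Inf" and yb: "y = Fin b"
  have "\<forall>e>0. \<exists>N. \<forall>n\<ge>N. \<exists>t. f n = Fin t \<and> \<bar>t - b\<bar> < e"
    using fy yb by (simp add: pconv_def)
  then obtain N1 where N1: "\<forall>n\<ge>N1. \<exists>t. f n = Fin t \<and> \<bar>t - b\<bar> < 1"
    using zero_less_one by blast
  have "\<forall>K. \<exists>N. \<forall>n\<ge>N. f n = Inf \<or> (\<exists>t. f n = Fin t \<and> \<bar>t\<bar> > K)"
    using fx xa by (simp add: pconv_def)
  then obtain N2 where N2: "\<forall>n\<ge>N2. f n = Inf \<or> (\<exists>t. f n = Fin t \<and> \<bar>t\<bar> > \<bar>b\<bar> + 1)"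
    by blast
  obtain t1 where t1: "f (max N1 N2) = Fin t1" "\<bar>t1 - b\<bar> < 1" using N1[rule_format, of "max N1 N2"] by auto
  from N2[rule_format, of "max N1 N2"] t1 have "\<bar>t1\<bar> > \<bar>b\<bar> + 1" by auto
  with t1(2) show "x = y" by (simp add: abs_if split: if_split_asm)
qed simp

lemma pconv_lim:
  assumes g: "g \<longlonglongrightarrow> e" and e: "e \<noteq> 0" and f: "\<forall>n\<ge>N0. f n = pt (g n)"
  shows "pconv f (pt e)"
proof -
  have g1: "(\<lambda>n. g n $ 1) \<longlonglongrightarrow> e$1" and g2: "(\<lambda>n. g n $ 2) \<longlonglongrightarrow> e$2"
    using g by (auto intro: tendsto_vec_nth)
  show ?thesis
  proof (cases "e$2 = 0")
    case False
    have ev2: "eventually (\<lambda>n. g n $ 2 \<noteq> 0) sequentially"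
      using g2 False by (rule tendsto_imp_eventually_ne)
    have rat: "(\<lambda>n. g n $ 1 / g n $ 2) \<longlonglongrightarrow> e$1 / e$2"
      using g1 g2 False by (rule tendsto_divide)
    have "\<exists>N. \<forall>n\<ge>N. \<exists>t. f n = Fin t \<and> \<bar>t - e$1/e$2\<bar> < ep" if ep: "ep > 0" for ep
    proof -
      have "eventually (\<lambda>n. dist (g n $ 1 / g n $ 2) (e$1/e$2) < ep) sequentially"
        using rat ep by (rule tendstoD)
      moreover have "eventually (\<lambda>n. n \<ge> N0) sequentially" by (rule eventually_ge_at_top)
      ultimately have "eventually (\<lambda>n. dist (g n $ 1 / g n $ 2) (e$1/e$2) < ep \<and> n \<ge> N0 \<and> g n $ 2 \<noteq> 0) sequentially"
        using ev2 by eventually_elim auto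
      then obtain N where N: "\<forall>n\<ge>N. dist (g n $ 1 / g n $ 2) (e$1/e$2) < ep \<and> n \<ge> N0 \<and> g n $ 2 \<noteq> 0"
        by (auto simp: eventually_sequentially)
      show ?thesis
        by (rule exI[of _ N]) (use N f in \<open>auto simp: pt_def dist_real_def\<close>)
    qed
    then show ?thesis using False by (simp add: pconv_def pt_def)
  next
    case True
    then have e1: "e$1 \<noteq> 0" using e by (simp add: vnz)
    have "\<exists>N. \<forall>n\<ge>N. f n = Inf \<or> (\<exists>t. f n = Fin t \<and> \<bar>t\<bar> > K)" for K
    proof -
      define c where "c = \<bar>e$1\<bar> / 2 / (\<bar>K\<bar> + 1)"
      have c: "c > 0" using e1 by (simp add: c_def)
      have a1: "(\<lambda>n. \<bar>g n $ 1\<bar>) \<longlonglongrightarrow> \<bar>e$1\<bar>" using g1 by (rule tendsto_rabs)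
      have a2: "(\<lambda>n. \<bar>g n $ 2\<bar>) \<longlonglongrightarrow> 0" using g2 True tendsto_rabs by fastforce
      have "eventually (\<lambda>n. \<bar>g n $ 1\<bar> > \<bar>e$1\<bar> / 2) sequentially"
        using a1 e1 by (intro order_tendstoD(1)) auto
      moreover have "eventually (\<lambda>n. \<bar>g n $ 2\<bar> < c) sequentially"
        using a2 c by (intro order_tendstoD(2)) auto
      moreover have "eventually (\<lambda>n. n \<ge> N0) sequentially" by (rule eventually_ge_at_top)
      ultimately have "eventually (\<lambda>n. \<bar>g n $ 1\<bar> > \<bar>e$1\<bar> / 2 \<and> \<bar>g n $ 2\<bar> < c \<and> n \<ge> N0) sequentially"
        by eventually_elim auto
      then obtain N where N: "\<forall>n\<ge>N. \<bar>g n $ 1\<bar> > \<bar>e$1\<bar> / 2 \<and> \<bar>g n $ 2\<bar> < c \<and> n \<ge> N0"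
        by (auto simp: eventually_sequentially)
      have "f n = Inf \<or> (\<exists>t. f n = Fin t \<and> \<bar>t\<bar> > K)" if n: "n \<ge> N" for n
      proof (cases "g n $ 2 = 0")
        case True then show ?thesis using N f n by (simp add: pt_def)
      next
        case False
        have h1: "\<bar>g n $ 1\<bar> > \<bar>e$1\<bar> / 2" and h2: "\<bar>g n $ 2\<bar> < c" using N n by auto
        have "\<bar>g n $ 2\<bar> * (\<bar>K\<bar> + 1) < c * (\<bar>K\<bar> + 1)"
          using h2 by (intro mult_strict_right_mono) auto
        also have "\<dots> = \<bar>e$1\<bar> / 2"
        proof -
          have "(\<bar>K\<bar> + 1) > 0" by simp
          then show ?thesis by (simp add: c_def field_simps)
        qed
        finally have "\<bar>g n $ 2\<bar> * (\<bar>K\<bar> + 1) < \<bar>g n $ 1\<bar>" using h1 by linarith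
        then have "\<bar>K\<bar> + 1 < \<bar>g n $ 1\<bar> / \<bar>g n $ 2\<bar>" using False
          by (simp add: pos_less_divide_eq mult.commute)
        then have "\<bar>g n $ 1 / g n $ 2\<bar> > K" by (simp add: abs_divide)
        then show ?thesis using N f n False by (simp add: pt_def)
      qed
      then show ?thesis by blast
    qed
    then show ?thesis using True by (simp add: pconv_def pt_def)
  qed
qed


lemma pt_scaleR: "c \<noteq> 0 \<Longrightarrow> pt (c *\<^sub>R u) = pt u"
  by (simp add: pt_def)

lemma mat1_nth: "(mat 1 :: 'a::zero_neq_one^2^2)$i$j = (if i = j then 1 else 0)"
  by (simp add: mat_def)

lemma det_R: "det (R M) = real_of_int (det M)"
  by (simp add: det_2)

lemma trace_R: "trace (R M) = real_of_int (trace M)"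
  by (simp add: trace2)

lemma CH: "(X::real^2^2) *v (X *v v) = trace X *\<^sub>R (X *v v) - det X *\<^sub>R v"
  by (simp add: v2_eq det_2 trace2 algebra_simps)

lemma all_fixed:
  assumes "SL2Z M" and "\<forall>y. mob M y = y"
  shows "M = mat 1 \<or> trace M = -2"
proof -
  have i: "mob M Inf = Inf" and z: "mob M (Fin 0) = Fin 0" and o: "mob M (Fin 1) = Fin 1"
    using assms(2) by auto
  have d: "M$1$1 * M$2$2 - M$1$2 * M$2$1 = 1" using assms(1) by (simp add: SL2Z_def det_2)
  from i have r: "M$2$1 = 0" by (simp add: mob_def Let_def split: if_splits)
  from z have "M$2$2 \<noteq> 0 \<and> M$1$2 = 0" by (simp add: mob_def Let_def split: if_splits)
  with o r have s: "M$2$2 \<noteq> 0" "M$1$2 = 0" "M$1$1 = M$2$2"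
    by (auto simp: mob_def Let_def split: if_splits)
  with d r have "M$2$2 * M$2$2 = 1" by simp
  then have "M$2$2 = 1 \<or> M$2$2 = -1"
    by (metis mult_cancel_left1 square_eq_1_iff)
  then show ?thesis using s r
    by (auto simp: m2_eq mat1_nth trace2)
qed

lemma att_char:
  assumes fx: "mob M x = x" and cv: "\<forall>y. mob M y \<noteq> y \<longrightarrow> pconv (\<lambda>n. (mob M ^^ n) y) x"
    and ex: "\<exists>y. mob M y \<noteq> y"
  shows "att_fp M = x"
  unfolding att_fp_def
proof (rule the_equality)
  show "mob M x = x \<and> (\<forall>y. mob M y \<noteq> y \<longrightarrow> pconv (\<lambda>n. (mob M ^^ n) y) x)" using fx cv by blast
next
  fix x' assume h: "mob M x' = x' \<and> (\<forall>y. mob M y \<noteq> y \<longrightarrow> pconv (\<lambda>n. (mob M ^^ n) y) x')"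
  from ex obtain y where y: "mob M y \<noteq> y" by blast
  show "x' = x" using h cv y pconv_unique by blast
qed

lemma det_R1: "SL2Z M \<Longrightarrow> det (R M) = 1"
  by (simp add: det_R SL2Z_def)

lemma att_hyp:
  assumes M: "SL2Z M" and lam: "lam > 1" and tr: "real_of_int (trace M) = lam + 1/lam"
    and e: "e \<noteq> 0" and ev: "R M *v e = lam *\<^sub>R e"
  shows "att_fp M = pt e"
proof -
  define X where "X = R M"
  have dX: "det X = 1" using M by (simp add: X_def det_R1)
  have tX: "trace X = lam + 1/lam" using tr by (simp add: X_def trace_R)
  have mobX: "mob M = mobR X" by (simp add: X_def mob_R)
  have ll: "lam * lam > 1 * 1" using lam by (intro mult_strict_mono) auto
  have lam0: "lam \<noteq> 0" "lam - 1/lam \<noteq> 0" using lam ll by (auto simp: field_simps)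
  have tr2: "lam + 1/lam > 2"
  proof -
    have "(lam - 1)^2 > 0" using lam by simp
    then have "lam * lam + 1 > 2 * lam" by (simp add: power2_eq_square algebra_simps)
    then show ?thesis using lam by (simp add: field_simps)
  qed
  have fixe: "mob M (pt e) = pt e"
    using e ev lam0 by (simp add: mobX mobR_pt X_def pt_scaleR)
  have conv: "pconv (\<lambda>n. (mob M ^^ n) y) (pt e)" if y: "mob M y \<noteq> y" for y
  proof -
    define v where "v = vecp y"
    define c where "c = 1 / (lam - 1/lam)"
    define p where "p = c *\<^sub>R (X *v v - (1/lam) *\<^sub>R v)"
    define q where "q = c *\<^sub>R (lam *\<^sub>R v - X *v v)"
    have CHv: "X *v (X *v v) = (lam + 1/lam) *\<^sub>R (X *v v) - v"
      using CH[of X v] dX tX by simp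
    have key1: "X *v (X *v v) - (1/lam) *\<^sub>R (X *v v) = lam *\<^sub>R (X *v v - (1/lam) *\<^sub>R v)"
      using CHv lam0 by (simp add: v2_eq field_simps del: mv_nth)
    have key2: "lam *\<^sub>R (X *v v) - X *v (X *v v) = (1/lam) *\<^sub>R (lam *\<^sub>R v - X *v v)"
      using CHv lam0 by (simp add: v2_eq field_simps del: mv_nth)
    have Xp: "X *v p = lam *\<^sub>R p"
    proof -
      have "X *v p = c *\<^sub>R (X *v (X *v v) - (1/lam) *\<^sub>R (X *v v))"
        by (simp add: p_def algebra_simps del: mv_nth)
      also have "\<dots> = lam *\<^sub>R p" by (simp add: key1 p_def)
      finally show ?thesis .
    qed
    have Xq: "X *v q = (1/lam) *\<^sub>R q"
    proof -
      have "X *v q = c *\<^sub>R (lam *\<^sub>R (X *v v) - X *v (X *v v))"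
        by (simp add: q_def algebra_simps del: mv_nth)
      also have "\<dots> = (1/lam) *\<^sub>R q" by (simp add: key2 q_def)
      finally show ?thesis .
    qed
    have "p + q = (c * (lam - 1/lam)) *\<^sub>R v"
      by (simp add: p_def q_def algebra_simps del: mv_nth)
    moreover have "c * (lam - 1/lam) = 1" using lam0 by (simp add: c_def)
    ultimately have vpq: "v = p + q" by simp
    have pw: "Xpow X n v = (lam^n) *\<^sub>R p + ((1/lam)^n) *\<^sub>R q" for n
    proof (induction n)
      case 0 then show ?case using vpq by simp
    next
      case (Suc n)
      have "Xpow X (Suc n) v = X *v ((lam^n) *\<^sub>R p + ((1/lam)^n) *\<^sub>R q)" using Suc by simp
      also have "\<dots> = (lam^n) *\<^sub>R (X *v p) + ((1/lam)^n) *\<^sub>R (X *v q)"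
        by (simp add: algebra_simps del: mv_nth)
      also have "\<dots> = (lam^Suc n) *\<^sub>R p + ((1/lam)^Suc n) *\<^sub>R q"
        using Xp Xq by (simp add: v2_eq algebra_simps del: mv_nth)
      finally show ?case .
    qed
    define g where "g n = p + ((1/lam^2)^n) *\<^sub>R q" for n
    have gn: "Xpow X n v = (lam^n) *\<^sub>R g n" for n
      using lam0 by (simp add: pw g_def v2_eq field_simps power_mult_distrib power2_eq_square power_mult[symmetric])
    have l2: "1/lam^2 < 1" "1/lam^2 > 0" using ll by (simp_all add: power2_eq_square)
    have gl: "g \<longlonglongrightarrow> p + 0 *\<^sub>R q"
      unfolding g_def by (intro tendsto_intros) (use l2 in auto)
    have pnz: "p \<noteq> 0"
    proof
      assume "p = 0"
      then have "X *v v = (1/lam) *\<^sub>R v" using lam0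
        by (simp add: p_def c_def v2_eq field_simps)
      then have "mob M y = y" using lam0 by (simp add: mobX mobR_def v_def pt_scaleR)
      with y show False by simp
    qed
    have "d2 (X *v p) (X *v e) = d2 p e" using dX by (simp add: d2_mv)
    moreover have "d2 (X *v p) (X *v e) = lam^2 * d2 p e"
      using Xp ev by (simp add: X_def d2_def power2_eq_square algebra_simps)
    ultimately have "(lam^2 - 1) * d2 p e = 0" by (simp add: algebra_simps)
    moreover have "lam^2 - 1 \<noteq> 0"
    proof -
      have "lam * lam > 1 * 1" using lam by (intro mult_strict_mono) auto
      then show ?thesis by (simp add: power2_eq_square)
    qed
    ultimately have "d2 p e = 0" by simp
    then have ppe: "pt p = pt e" using pnz e by (simp add: pt_eq_iff)
    have "(mob M ^^ n) y = pt (g n)" for n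
    proof -
      have "(mob M ^^ n) y = pt (Xpow X n v)" by (simp add: mobX orbit dX v_def)
      also have "\<dots> = pt (g n)" using lam0 by (simp add: gn pt_scaleR)
      finally show ?thesis .
    qed
    then have "\<forall>n\<ge>0. (mob M ^^ n) y = pt (g n)" by simp
    then have "pconv (\<lambda>n. (mob M ^^ n) y) (pt p)"
      using gl pnz by (intro pconv_lim[of g p]) auto
    then show ?thesis using ppe by simp
  qed
  have "\<exists>y. mob M y \<noteq> y"
  proof (rule ccontr)
    assume "\<not> ?thesis"
    then have "M = mat 1 \<or> trace M = -2" using all_fixed[OF M] by auto
    then have "real_of_int (trace M) \<le> 2" by (auto simp: trace2 mat1_nth)
    with tr tr2 show False by simp
  qed
  then show ?thesis using att_char fixe conv by blast
qed


lemma fix2: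
  assumes "(X::real^2^2) *v w = w" "X *v e = e" "d2 w e \<noteq> 0"
  shows "X = mat 1"
proof -
  have a: "(X$1$1 - 1) * w$1 + X$1$2 * w$2 = 0" "(X$1$1 - 1) * e$1 + X$1$2 * e$2 = 0"
          "X$2$1 * w$1 + (X$2$2 - 1) * w$2 = 0" "X$2$1 * e$1 + (X$2$2 - 1) * e$2 = 0"
    using assms(1,2) by (simp_all add: v2_eq algebra_simps)
  have "(X$1$1 - 1) * d2 w e = e$2 * ((X$1$1 - 1) * w$1 + X$1$2 * w$2) - w$2 * ((X$1$1 - 1) * e$1 + X$1$2 * e$2)"
    by (simp add: d2_def algebra_simps)
  then have 1: "X$1$1 = 1" using a assms(3) by simp
  have "X$1$2 * d2 w e = w$1 * ((X$1$1 - 1) * e$1 + X$1$2 * e$2) - e$1 * ((X$1$1 - 1) * w$1 + X$1$2 * w$2)"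
    by (simp add: d2_def algebra_simps)
  then have 2: "X$1$2 = 0" using a assms(3) by simp
  have "X$2$1 * d2 w e = e$2 * (X$2$1 * w$1 + (X$2$2 - 1) * w$2) - w$2 * (X$2$1 * e$1 + (X$2$2 - 1) * e$2)"
    by (simp add: d2_def algebra_simps)
  then have 3: "X$2$1 = 0" using a assms(3) by simp
  have "(X$2$2 - 1) * d2 w e = w$1 * (X$2$1 * e$1 + (X$2$2 - 1) * e$2) - e$1 * (X$2$1 * w$1 + (X$2$2 - 1) * w$2)"
    by (simp add: d2_def algebra_simps)
  then have 4: "X$2$2 = 1" using a assms(3) by simp
  show ?thesis using 1 2 3 4 by (simp add: m2_eq mat1_nth)
qed

lemma R_eq1: "R M = mat 1 \<Longrightarrow> M = mat 1"
  by (simp add: m2_eq mat1_nth)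

lemma att_par:
  assumes M: "SL2Z M" and tr: "trace M = 2" and M1: "M \<noteq> mat 1"
    and e: "e \<noteq> 0" and ev: "R M *v e = e"
  shows "att_fp M = pt e"
proof -
  define X where "X = R M"
  have dX: "det X = 1" using M by (simp add: X_def det_R1)
  have tX: "trace X = 2" using tr by (simp add: X_def trace_R)
  have mobX: "mob M = mobR X" by (simp add: X_def mob_R)
  have fixe: "mob M (pt e) = pt e"
    using e ev by (simp add: mobX mobR_pt X_def)
  have conv: "pconv (\<lambda>n. (mob M ^^ n) y) (pt e)" if y: "mob M y \<noteq> y" for y
  proof -
    define v where "v = vecp y"
    define w where "w = X *v v - v"
    have CHv: "X *v (X *v v) = 2 *\<^sub>R (X *v v) - v"
      using CH[of X v] dX tX by simp
    have Xw: "X *v w = w"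
      using CHv by (simp add: w_def v2_eq algebra_simps del: mv_nth)
    have pw: "Xpow X n v = v + real n *\<^sub>R w" for n
    proof (induction n)
      case 0 then show ?case by simp
    next
      case (Suc n)
      have "Xpow X (Suc n) v = X *v (v + real n *\<^sub>R w)" using Suc by simp
      also have "\<dots> = X *v v + real n *\<^sub>R (X *v w)"
        by (simp add: algebra_simps del: mv_nth)
      also have "\<dots> = v + real (Suc n) *\<^sub>R w"
      proof -
        have Xv: "X *v v = v + w" by (simp add: w_def)
        show ?thesis using Xw Xv by (simp add: algebra_simps del: mv_nth)
      qed
      finally show ?case .
    qed
    define g where "g n = inverse (real n) *\<^sub>R v + w" for n
    have gn: "n \<ge> 1 \<Longrightarrow> Xpow X n v = real n *\<^sub>R g n" for n
      by (simp add: pw g_def algebra_simps del: mv_nth)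
    have gl: "g \<longlonglongrightarrow> 0 *\<^sub>R v + w"
      unfolding g_def by (intro tendsto_intros lim_inverse_n)
    have wnz: "w \<noteq> 0"
    proof
      assume "w = 0"
      then have "X *v v = v" by (simp add: w_def)
      then have "mob M y = y" by (simp add: mobX mobR_def v_def)
      with y show False by simp
    qed
    have "d2 w e = 0"
    proof (rule ccontr)
      assume "d2 w e \<noteq> 0"
      then have "X = mat 1" using fix2[OF Xw] ev by (simp add: X_def)
      then show False using M1 R_eq1 by (simp add: X_def)
    qed
    then have ppe: "pt w = pt e" using wnz e by (simp add: pt_eq_iff)
    have "\<forall>n\<ge>1. (mob M ^^ n) y = pt (g n)"
    proof (intro allI impI)
      fix n :: nat assume n: "n \<ge> 1"
      have "(mob M ^^ n) y = pt (Xpow X n v)" by (simp add: mobX orbit dX v_def)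
      also have "\<dots> = pt (g n)" using n by (simp add: gn pt_scaleR)
      finally show "(mob M ^^ n) y = pt (g n)" .
    qed
    then have "pconv (\<lambda>n. (mob M ^^ n) y) (pt w)"
      using gl wnz by (intro pconv_lim[of g w]) auto
    then show ?thesis using ppe by simp
  qed
  have "\<exists>y. mob M y \<noteq> y"
  proof (rule ccontr)
    assume "\<not> ?thesis"
    then have "M = mat 1 \<or> trace M = -2" using all_fixed[OF M] by auto
    with tr M1 show False by simp
  qed
  then show ?thesis using att_char fixe conv by blast
qed


section \<open>Inverses\<close>

lemma inv2_nth[simp]: "inv2 M $1$1 = M$2$2" "inv2 M $1$2 = - M$1$2" "inv2 M $2$1 = - M$2$1" "inv2 M $2$2 = M$1$1"
  by (simp_all add: inv2_def)

lemma SL2Z_inv2: "SL2Z M \<Longrightarrow> SL2Z (inv2 M)"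
  by (simp add: SL2Z_def det_2 algebra_simps)

lemma trace_inv2: "trace (inv2 M) = trace M"
  by (simp add: trace2)

lemma inv2_inv2[simp]: "inv2 (inv2 M) = M"
  by (simp add: m2_eq)

lemma inv2_1: "inv2 M = mat 1 \<Longrightarrow> M = mat 1"
  by (simp add: m2_eq mat1_nth)

lemma inv2_eig:
  assumes "SL2Z M" "R M *v w = c *\<^sub>R w" "c \<noteq> 0"
  shows "R (inv2 M) *v w = (1/c) *\<^sub>R w"
proof -
  have d: "M$1$1 * M$2$2 - M$1$2 * M$2$1 = 1" using assms(1) by (simp add: SL2Z_def det_2)
  have "R (inv2 M) *v (R M *v w) = w"
  proof -
    have "real_of_int (M$1$1 * M$2$2 - M$1$2 * M$2$1) = 1" using d by simp
    then show ?thesis by (simp add: v2_eq algebra_simps)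
  qed
  then have "c *\<^sub>R (R (inv2 M) *v w) = w" using assms(2) by (simp add: algebra_simps del: mv_nth)
  then show ?thesis using assms(3)
    by (metis divide_inverse_commute inverse_eq_divide right_inverse scaleR_one scaleR_scaleR mult.commute)
qed

section \<open>Arcs as cones\<close>

definition tri :: "real^2 \<Rightarrow> real^2 \<Rightarrow> real^2 \<Rightarrow> real" where
  "tri a b c = d2 a b * d2 b c * d2 c a"

lemma ccw_tri: "z \<in> ccw_int p q \<longleftrightarrow> z = p \<or> z = q \<or> tri (vecp p) (vecp z) (vecp q) > 0"
proof (cases p; cases q; cases z)
  fix x y t assume h: "p = Fin x" "q = Fin y" "z = Fin t"
  have e: "tri (vecp p) (vecp z) (vecp q) = (x - t) * (t - y) * (y - x)"
    using h by (simp add: tri_def d2_def vecp_def)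
  show ?thesis
  proof (cases "x \<le> y")
    case True
    then show ?thesis using h e
      by (auto simp: zero_less_mult_iff mult_less_0_iff)
  next
    case False
    then show ?thesis using h e
      by (auto simp: zero_less_mult_iff mult_less_0_iff)
  qed
qed (auto simp: tri_def d2_def vecp_def)

definition kone :: "real^2 \<Rightarrow> real^2 \<Rightarrow> (real^2) set" where
  "kone P Q = {s *\<^sub>R P + t *\<^sub>R Q | s t. s \<ge> 0 \<and> t \<ge> 0 \<and> s + t > 0}"

lemma coords:
  assumes D: "d2 P Q \<noteq> 0"
  shows "u = (d2 u Q / d2 P Q) *\<^sub>R P + (d2 P u / d2 P Q) *\<^sub>R Q"
proof -
  have e1: "d2 u Q * P$1 + d2 P u * Q$1 = d2 P Q * u$1" by (simp add: d2_def algebra_simps)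
  have e2: "d2 u Q * P$2 + d2 P u * Q$2 = d2 P Q * u$2" by (simp add: d2_def algebra_simps)
  have "(d2 u Q / d2 P Q) * P$1 + (d2 P u / d2 P Q) * Q$1 = (d2 u Q * P$1 + d2 P u * Q$1) / d2 P Q"
    by (simp add: add_divide_distrib)
  also have "\<dots> = u$1" using e1 D by simp
  finally have 1: "(d2 u Q / d2 P Q) * P$1 + (d2 P u / d2 P Q) * Q$1 = u$1" .
  have "(d2 u Q / d2 P Q) * P$2 + (d2 P u / d2 P Q) * Q$2 = (d2 u Q * P$2 + d2 P u * Q$2) / d2 P Q"
    by (simp add: add_divide_distrib)
  also have "\<dots> = u$2" using e2 D by simp
  finally have 2: "(d2 u Q / d2 P Q) * P$2 + (d2 P u / d2 P Q) * Q$2 = u$2" .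
  show ?thesis using 1 2 by (simp add: v2_eq)
qed

lemma d2_lin1: "d2 (a *\<^sub>R P + b *\<^sub>R Q) W = a * d2 P W + b * d2 Q W"
  by (simp add: d2_def algebra_simps)
lemma d2_lin2: "d2 W (a *\<^sub>R P + b *\<^sub>R Q) = a * d2 W P + b * d2 W Q"
  by (simp add: d2_def algebra_simps)
lemma d2_self[simp]: "d2 P P = 0"
  by (simp add: d2_def)
lemma d2_scale1: "d2 (a *\<^sub>R P) W = a * d2 P W" by (simp add: d2_def algebra_simps)
lemma d2_scale2: "d2 W (a *\<^sub>R P) = a * d2 W P" by (simp add: d2_def algebra_simps)

lemma vecp_ptR: "u \<noteq> 0 \<Longrightarrow> \<exists>c. c \<noteq> 0 \<and> vecp (pt u) = c *\<^sub>R u"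
  using vecp_pt by (simp add: scalar_mult_eq_scaleR)

lemma in_cone_pt:
  assumes D: "d2 P Q \<noteq> 0" and u: "u \<noteq> 0"
  shows "pt u \<in> pt ` kone P Q \<longleftrightarrow> d2 u Q * d2 P u \<ge> 0"
proof
  assume "pt u \<in> pt ` kone P Q"
  then obtain s t where st: "s \<ge> 0" "t \<ge> 0" "s + t > 0" and eq: "pt u = pt (s *\<^sub>R P + t *\<^sub>R Q)"
    by (auto simp: kone_def)
  define w where "w = s *\<^sub>R P + t *\<^sub>R Q"
  have "d2 w Q = s * d2 P Q" "d2 P w = t * d2 P Q"
    by (simp_all add: w_def d2_lin1 d2_lin2 d2_anti[of Q P])
  then have wnz: "w \<noteq> 0" using st D by (auto simp: d2_def)
  obtain c where c: "c \<noteq> 0" "vecp (pt w) = c *\<^sub>R w" using vecp_ptR[OF wnz] by blast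
  obtain c' where c': "c' \<noteq> 0" "vecp (pt u) = c' *\<^sub>R u" using vecp_ptR[OF u] by blast
  have "c' *\<^sub>R u = c *\<^sub>R w" using c c' eq w_def by simp
  then have "u = (c / c') *\<^sub>R w" using c'(1)
    by (metis divide_inverse_commute inverse_eq_divide right_inverse scaleR_one scaleR_scaleR mult.commute)
  then have "d2 u Q * d2 P u = (c/c')^2 * (s * t) * (d2 P Q)^2"
    by (simp add: w_def d2_lin1 d2_lin2 d2_scale1 d2_scale2 power2_eq_square algebra_simps)
  then show "d2 u Q * d2 P u \<ge> 0" using st by simp
next
  assume h: "d2 u Q * d2 P u \<ge> 0"
  define s where "s = d2 u Q / d2 P Q"
  define t where "t = d2 P u / d2 P Q"
  have u_eq: "u = s *\<^sub>R P + t *\<^sub>R Q" using coords[OF D] by (simp add: s_def t_def)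
  have st0: "s * t \<ge> 0" using h D by (simp add: s_def t_def zero_le_mult_iff zero_le_divide_iff divide_less_0_iff mult_less_0_iff)
  have nz: "\<not> (s = 0 \<and> t = 0)" using u u_eq by auto
  show "pt u \<in> pt ` kone P Q"
  proof (cases "s \<ge> 0 \<and> t \<ge> 0")
    case True
    then have "u \<in> kone P Q" using nz u_eq unfolding kone_def by force
    then show ?thesis by blast
  next
    case False
    then have "s \<le> 0" "t \<le> 0" using st0 by (auto simp: zero_le_mult_iff)
    then have "- u \<in> kone P Q" using nz u_eq unfolding kone_def
      by (intro CollectI exI[of _ "-s"] exI[of _ "-t"]) (auto simp: algebra_simps)
    moreover have "pt u = pt (- u)" using pt_scaleR[of "-1" u] by simp
    ultimately show ?thesis by blast
  qed
qed


lemma kone_nz: "d2 P Q \<noteq> 0 \<Longrightarrow> w \<in> kone P Q \<Longrightarrow> w \<noteq> 0"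
proof -
  assume D: "d2 P Q \<noteq> 0" and w: "w \<in> kone P Q"
  then obtain s t where st: "s \<ge> 0" "t \<ge> 0" "s + t > 0" and we: "w = s *\<^sub>R P + t *\<^sub>R Q"
    by (auto simp: kone_def)
  have "d2 w Q = s * d2 P Q" "d2 P w = t * d2 P Q"
    by (simp_all add: we d2_lin1 d2_lin2 d2_anti[of Q P])
  then show "w \<noteq> 0" using st D by (auto simp: d2_def)
qed

lemma d2_neg1: "d2 (- P) W = - d2 P W" by (simp add: d2_def)
lemma d2_neg2: "d2 W (- P) = - d2 W P" by (simp add: d2_def)

lemma kone_sym: "kone P Q = kone Q P"
  unfolding kone_def by (auto simp: add.commute) (metis add.commute)+

lemma pt_neg: "pt (- P) = pt P"
  using pt_scaleR[of "-1" P] by simp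

lemma sign_lem: "K > 0 \<Longrightarrow> (x = 0 \<or> y = 0 \<or> K * (y * x) > (0::real)) \<longleftrightarrow> y * x \<ge> 0"
proof -
  assume K: "K > 0"
  have "K * (y * x) > 0 \<longleftrightarrow> y * x > 0" using K by (simp add: zero_less_mult_iff)
  then show ?thesis by auto
qed

lemma ARC:
  assumes D: "d2 P Q < 0"
  shows "ccw_int (pt P) (pt Q) = pt ` kone P Q"
proof (rule set_eqI)
  fix z
  define u where "u = vecp z"
  have z: "z = pt u" and u: "u \<noteq> 0" by (simp_all add: u_def)
  have P: "P \<noteq> 0" and Q: "Q \<noteq> 0" using D by (auto simp: d2_def)
  obtain a where a: "a \<noteq> 0" "vecp (pt P) = a *\<^sub>R P" using vecp_ptR[OF P] by blast
  obtain b where b: "b \<noteq> 0" "vecp (pt Q) = b *\<^sub>R Q" using vecp_ptR[OF Q] by blast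
  define k0 where "k0 = (a*a*b*b) * (- d2 P Q)"
  have tr: "tri (vecp (pt P)) u (vecp (pt Q)) = k0 * (d2 u Q * d2 P u)"
    by (simp add: k0_def a b tri_def d2_scale1 d2_scale2 d2_anti[of Q P] algebra_simps)
  have "a*a > 0" "b*b > 0" using a b by (metis not_real_square_gt_zero)+
  then have ab: "a*a*b*b > 0" by (metis mult_pos_pos mult.assoc)
  have k: "k0 > 0" using mult_pos_pos[OF ab, of "- d2 P Q"] D by (simp add: k0_def)
  have "z \<in> ccw_int (pt P) (pt Q) \<longleftrightarrow> d2 P u = 0 \<or> d2 u Q = 0 \<or> k0 * (d2 u Q * d2 P u) > 0"
  proof -
    have zP: "z = pt P \<longleftrightarrow> d2 P u = 0" using z u P pt_eq_iff d2_anti[of u P] by simp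
    have zQ: "z = pt Q \<longleftrightarrow> d2 u Q = 0" using z u Q pt_eq_iff by simp
    show ?thesis using ccw_tri[of z "pt P" "pt Q"] zP zQ tr by (simp add: u_def[symmetric])
  qed
  also have "\<dots> \<longleftrightarrow> d2 u Q * d2 P u \<ge> 0"
    using sign_lem[OF k] by blast
  also have "\<dots> \<longleftrightarrow> z \<in> pt ` kone P Q"
    using in_cone_pt[of P Q u] D u z by simp
  finally show "z \<in> ccw_int (pt P) (pt Q) \<longleftrightarrow> z \<in> pt ` kone P Q" .
qed

lemma TWOARCS:
  assumes D: "d2 P Q \<noteq> 0"
  shows "(ccw_int (pt P) (pt Q) = pt ` kone P Q \<and> ccw_int (pt Q) (pt P) = pt ` kone (-P) Q) \<or>
         (ccw_int (pt P) (pt Q) = pt ` kone (-P) Q \<and> ccw_int (pt Q) (pt P) = pt ` kone P Q)"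
proof (cases "d2 P Q < 0")
  case True
  have "ccw_int (pt Q) (pt P) = ccw_int (pt Q) (pt (-P))" by (simp add: pt_neg)
  also have "\<dots> = pt ` kone Q (-P)" using True by (intro ARC) (simp add: d2_neg2 d2_anti[of Q P])
  finally show ?thesis using ARC[OF True] by (simp add: kone_sym)
next
  case False
  then have D': "d2 P Q > 0" using D by simp
  have "ccw_int (pt P) (pt Q) = ccw_int (pt (-P)) (pt Q)" by (simp add: pt_neg)
  also have "\<dots> = pt ` kone (-P) Q" using D' by (intro ARC) (simp add: d2_neg1)
  finally show ?thesis using ARC[of Q P] D' by (simp add: kone_sym d2_anti[of Q P])
qed

lemma INV:
  assumes D: "d2 P Q \<noteq> 0" and dX: "det X \<noteq> 0"
    and XP: "X *v P = a *\<^sub>R P + b *\<^sub>R Q" and XQ: "X *v Q = c *\<^sub>R P + d *\<^sub>R Q"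
    and nn: "a \<ge> 0" "b \<ge> 0" "c \<ge> 0" "d \<ge> 0"
  shows "mobR X ` (pt ` kone P Q) \<subseteq> pt ` kone P Q"
proof
  fix z assume "z \<in> mobR X ` (pt ` kone P Q)"
  then obtain w where w: "w \<in> kone P Q" and z: "z = mobR X (pt w)" by auto
  obtain s t where st: "s \<ge> 0" "t \<ge> 0" "s + t > 0" and we: "w = s *\<^sub>R P + t *\<^sub>R Q"
    using w by (auto simp: kone_def)
  have wnz: "w \<noteq> 0" using kone_nz[OF D w] .
  have Xw: "X *v w = (s*a + t*c) *\<^sub>R P + (s*b + t*d) *\<^sub>R Q"
    by (simp add: we XP XQ algebra_simps del: mv_nth)
  have Xwnz: "X *v w \<noteq> 0" using wnz dX mv_zero_iff by blast
  have "s*a + t*c \<ge> 0" "s*b + t*d \<ge> 0" using st nn by simp_all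
  moreover have "s*a + t*c + (s*b + t*d) > 0"
  proof (rule ccontr)
    assume "\<not> ?thesis"
    with \<open>s*a + t*c \<ge> 0\<close> \<open>s*b + t*d \<ge> 0\<close> have "s*a + t*c = 0" "s*b + t*d = 0" by linarith+
    then have "X *v w = 0" using Xw by simp
    with Xwnz show False by simp
  qed
  ultimately have "X *v w \<in> kone P Q" unfolding kone_def using Xw by blast
  moreover have "z = pt (X *v w)" using z wnz by (simp add: mobR_pt)
  ultimately show "z \<in> pt ` kone P Q" by blast
qed

lemma NONINV:
  assumes D: "d2 P Q \<noteq> 0" and w: "w \<in> kone P Q"
    and Xw: "X *v w = sg *\<^sub>R P + ta *\<^sub>R Q" and neg: "sg * ta < 0"
  shows "\<not> (mobR X ` (pt ` kone P Q) \<subseteq> pt ` kone P Q)"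
proof
  assume sub: "mobR X ` (pt ` kone P Q) \<subseteq> pt ` kone P Q"
  have wnz: "w \<noteq> 0" using kone_nz[OF D w] .
  have e1: "d2 (X *v w) Q = sg * d2 P Q" "d2 P (X *v w) = ta * d2 P Q"
    by (simp_all add: Xw d2_lin1 d2_lin2 d2_anti[of Q P])
  have "sg \<noteq> 0" using neg by auto
  have Xwnz: "X *v w \<noteq> 0"
  proof
    assume "X *v w = 0"
    then have "d2 (X *v w) Q = 0" by (simp add: d2_def)
    with e1 D \<open>sg \<noteq> 0\<close> show False by simp
  qed
  have "pt (X *v w) \<in> pt ` kone P Q" using sub w wnz by (auto simp: mobR_pt[symmetric])
  then have "d2 (X *v w) Q * d2 P (X *v w) \<ge> 0" using in_cone_pt[OF D Xwnz] by simp
  then have "(sg * ta) * (d2 P Q * d2 P Q) \<ge> 0" using e1 by (simp add: algebra_simps)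
  moreover have "d2 P Q * d2 P Q > 0" using D by (metis not_real_square_gt_zero)
  ultimately have "sg * ta \<ge> 0" by (simp add: zero_le_mult_iff)
  with neg show False by simp
qed


section \<open>Integrality: no common eigenvector\<close>

lemma rat_root:
  assumes d: "(d::real) \<in> \<rat>" and eq: "d * d - of_int t * d + 1 = 0"
  shows "t = 2 \<or> t = -2"
proof -
  obtain a b where b: "b > 0" and cp: "coprime a b" and de: "d = of_int a / of_int b"
    using Rats_cases'[OF d] by blast
  have "real_of_int b \<noteq> 0" using b by simp
  then have "real_of_int (a*a - t*a*b + b*b) = (real_of_int b)^2 * (d * d - of_int t * d + 1)"
    by (simp add: de field_simps power2_eq_square)
  then have "real_of_int (a*a - t*a*b + b*b) = 0" using eq by (metis mult_zero_right)
  then have ie: "a*a - t*a*b + b*b = 0" by (simp only: of_int_eq_0_iff)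
  then have "a*a = b * (t*a - b)" by (simp add: algebra_simps)
  then have "b dvd a*a" by simp
  moreover have "coprime (a*a) b" using cp by simp
  ultimately have "is_unit b" by (meson coprime_common_divisor dvd_refl)
  then have b1: "b = 1" using b by simp
  then have "a * (t - a) = 1" using ie by (simp add: algebra_simps)
  then show ?thesis by (auto simp: zmult_eq_1_iff)
qed

lemma common_eig:
  assumes A: "SL2Z A" and B: "SL2Z B" and tB: "trace B > 2" and v: "v \<noteq> 0"
    and ea: "R A *v v = c *\<^sub>R v" and eb: "R B *v v = d *\<^sub>R v"
  shows "A ** B = B ** A"
proof (rule ccontr)
  assume nc: "A ** B \<noteq> B ** A"
  define N where "N = A ** B - B ** A"
  have RN: "R N *v v = 0"
  proof -
    have "R N *v v = R A *v (R B *v v) - R B *v (R A *v v)"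
      by (simp add: N_def v2_eq algebra_simps)
    also have "\<dots> = 0" by (simp add: ea eb algebra_simps del: mv_nth)
    finally show ?thesis .
  qed
  have "N \<noteq> 0" using nc by (simp add: N_def)
  then have "\<exists>i. N$i$1 \<noteq> 0 \<or> N$i$2 \<noteq> 0" by (metis v2_eq zero_index)
  then obtain i where i: "N$i$1 \<noteq> 0 \<or> N$i$2 \<noteq> 0" by blast
  define w where "w = vec2 (- real_of_int (N$i$2)) (real_of_int (N$i$1))"
  have wnz: "w \<noteq> 0" using i by (auto simp: w_def vnz)
  have "(R N *v v)$i = 0" using RN by simp
  then have "real_of_int (N$i$1) * v$1 + real_of_int (N$i$2) * v$2 = 0"
    by (simp del: of_int_diff)
  then have "d2 v w = 0" by (simp add: d2_def w_def algebra_simps)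
  then have "pt v = pt w" using v wnz by (simp add: pt_eq_iff)
  obtain k where k: "k \<noteq> 0" "v = k *\<^sub>R w"
  proof -
    have dd: "v$1 * w$2 = v$2 * w$1" using \<open>d2 v w = 0\<close> by (simp add: d2_def)
    show ?thesis
    proof (cases "w$1 = 0")
      case True
      then have w2: "w$2 \<noteq> 0" using wnz by (simp add: vnz)
      have v1: "v$1 = 0" using dd True w2 by simp
      have ve: "v = (v$2 / w$2) *\<^sub>R w" using True w2 v1 by (simp add: v2_eq)
      have "v$2 \<noteq> 0" using v v1 by (simp add: vnz)
      then show ?thesis using w2 by (intro that[OF _ ve]) simp
    next
      case False
      have ve: "v = (v$1 / w$1) *\<^sub>R w"
        using False dd by (simp add: v2_eq)
      have "v$1 \<noteq> 0"
      proof
        assume "v$1 = 0"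
        then have "v$2 = 0" using dd False by simp
        with \<open>v$1 = 0\<close> v show False by (simp add: vnz)
      qed
      then show ?thesis using False by (intro that[OF _ ve]) simp
    qed
  qed
  have Bw: "R B *v w = d *\<^sub>R w"
  proof -
    have "k *\<^sub>R (R B *v w) = k *\<^sub>R (d *\<^sub>R w)" using eb k by (simp add: algebra_simps del: mv_nth)
    then have "k *\<^sub>R (R B *v w) = k *\<^sub>R (d *\<^sub>R w)" by simp
    then show ?thesis using k(1) by (simp del: mv_nth scaleR_scaleR)
  qed
  have dQ: "d \<in> \<rat>"
  proof (cases "w$2 = 0")
    case True
    then have w1: "w$1 \<noteq> 0" using wnz by (simp add: vnz)
    have "d = (R B *v w)$1 / w$1" using Bw w1 by simp
    moreover have "(R B *v w)$1 \<in> \<rat>" "w$1 \<in> \<rat>" by (simp_all add: w_def)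
    ultimately show ?thesis by simp
  next
    case False
    have "d = (R B *v w)$2 / w$2" using Bw False by simp
    moreover have "(R B *v w)$2 \<in> \<rat>" "w$2 \<in> \<rat>" by (simp_all add: w_def)
    ultimately show ?thesis by simp
  qed
  have "R B *v (R B *v w) = trace (R B) *\<^sub>R (R B *v w) - det (R B) *\<^sub>R w" by (rule CH)
  then have "(d * d) *\<^sub>R w = (real_of_int (trace B) * d - 1) *\<^sub>R w"
    using B by (simp add: Bw trace_R det_R1 algebra_simps del: mv_nth)
  then have "d * d = real_of_int (trace B) * d - 1" using wnz by simp
  then have "d * d - real_of_int (trace B) * d + 1 = 0" by simp
  then have "trace B = 2 \<or> trace B = -2" using rat_root[OF dQ] by blast
  with tB show False by simp
qed



(* ---- from T2.thy ---- *)


lemma lam_ex: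
  assumes "(t::real) \<ge> 2"
  shows "\<exists>lam. lam \<ge> 1 \<and> lam + 1/lam = t \<and> (t > 2 \<longrightarrow> lam > 1)"
proof -
  define s where "s = sqrt (t*t - 4)"
  have t4: "t*t \<ge> 2*2" using mult_mono[of 2 t 2 t] assms by simp
  have s0: "s \<ge> 0" "s * s = t*t - 4" using t4 by (simp_all add: s_def)
  define lam where "lam = (t + s)/2"
  have l1: "lam \<ge> 1" using assms s0 by (simp add: lam_def)
  have "lam * lam + 1 = t * lam" using s0 by (simp add: lam_def field_simps)
  then have e: "lam + 1/lam = t" using l1 by (simp add: field_simps)
  have "t > 2 \<longrightarrow> lam > 1" using s0 by (simp add: lam_def)
  then show ?thesis using l1 e by blast
qed

lemma eig_ex:
  assumes d: "det (X::real^2^2) = 1" and t: "trace X = lam + 1/lam" and l: "lam \<ge> 1" and X1: "X \<noteq> mat 1"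
  shows "\<exists>v. v \<noteq> 0 \<and> X *v v = (1/lam) *\<^sub>R v"
proof -
  have l0: "lam \<noteq> 0" using l by simp
  have key: "X *v (X *v u - lam *\<^sub>R u) = (1/lam) *\<^sub>R (X *v u - lam *\<^sub>R u)" for u
  proof -
    have "X *v (X *v u) = (lam + 1/lam) *\<^sub>R (X *v u) - u" using CH[of X u] d t by simp
    then show ?thesis using l0 by (simp add: algebra_simps v2_eq field_simps del: mv_nth)
  qed
  define e1 :: "real^2" where "e1 = vec2 1 0"
  define e2 :: "real^2" where "e2 = vec2 0 1"
  show ?thesis
  proof (cases "X *v e1 - lam *\<^sub>R e1 = 0 \<and> X *v e2 - lam *\<^sub>R e2 = 0")
    case True
    then have h: "X$1$1 = lam" "X$2$1 = 0" "X$1$2 = 0" "X$2$2 = lam"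
      by (auto simp: e1_def e2_def v2_eq)
    then have "lam * lam = 1" using d by (simp add: det_2)
    moreover have "lam > 1 \<Longrightarrow> lam * lam > 1 * 1" by (intro mult_strict_mono) auto
    ultimately have "lam = 1" using l by force
    then have "X = mat 1" using h by (simp add: m2_eq mat1_nth)
    with X1 show ?thesis by simp
  next
    case False
    then show ?thesis using key by blast
  qed
qed

lemma parallel:
  assumes u: "(u::real^2) \<noteq> 0" and d: "d2 u v = 0"
  shows "\<exists>k. v = k *\<^sub>R u"
proof -
  have dd: "u$1 * v$2 = u$2 * v$1" using d by (simp add: d2_def)
  show ?thesis
  proof (cases "u$1 = 0")
    case True
    then have u2: "u$2 \<noteq> 0" using u by (simp add: vnz)
    have "v$1 = 0" using dd True u2 by simp
    then have "v = (v$2 / u$2) *\<^sub>R u" using True u2 by (simp add: v2_eq)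
    then show ?thesis by blast
  next
    case False
    have "v$2 = v$1 / u$1 * u$2" using False dd by (simp add: field_simps)
    then have "v = (v$1 / u$1) *\<^sub>R u" using False by (simp add: v2_eq)
    then show ?thesis by blast
  qed
qed

lemma inv2_apply:
  assumes "SL2Z M"
  shows "R (inv2 M) *v (R M *v x) = x"
proof -
  have d: "M$1$1 * M$2$2 - M$1$2 * M$2$1 = 1" using assms by (simp add: SL2Z_def det_2)
  have "real_of_int (M$1$1 * M$2$2 - M$1$2 * M$2$1) = 1" using d by simp
  then show ?thesis by (simp add: v2_eq algebra_simps)
qed

lemma inv2_from:
  assumes "SL2Z M" "R M *v x = y"
  shows "R (inv2 M) *v y = x"
  using inv2_apply[OF assms(1), of x] assms(2) by simp

lemma att_gen:
  assumes M: "SL2Z M" and l: "lam \<ge> 1" and tr: "real_of_int (trace M) = lam + 1/lam"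
    and M1: "M \<noteq> mat 1" and e: "e \<noteq> 0" and ev: "R M *v e = lam *\<^sub>R e"
  shows "att_fp M = pt e"
proof (cases "lam = 1")
  case True
  then have "trace M = 2" using tr by simp
  then show ?thesis using att_par[OF M _ M1 e] ev True by simp
next
  case False
  then show ?thesis using att_hyp[OF M _ tr e ev] l by simp
qed

lemma rep_gen:
  assumes M: "SL2Z M" and l: "lam \<ge> 1" and tr: "real_of_int (trace M) = lam + 1/lam"
    and M1: "M \<noteq> mat 1" and e: "e \<noteq> 0" and ev: "R M *v e = (1/lam) *\<^sub>R e"
  shows "rep_fp M = pt e"
proof -
  have "R (inv2 M) *v e = lam *\<^sub>R e" using inv2_eig[OF M ev] l by simp
  moreover have "inv2 M \<noteq> mat 1" using M1 inv2_1 by blast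
  ultimately show ?thesis unfolding rep_fp_def
    using att_gen[OF SL2Z_inv2[OF M] l _ _ e] tr by (simp add: trace_inv2)
qed



(* ---- from T3.thy ---- *)


lemma d2_add1: "d2 (x + y) w = d2 x w + d2 y w" by (simp add: d2_def algebra_simps)
lemma d2_add2: "d2 w (x + y) = d2 w x + d2 w y" by (simp add: d2_def algebra_simps)
lemma d2_diff1: "d2 (x - y) w = d2 x w - d2 y w" by (simp add: d2_def algebra_simps)
lemma d2_diff2: "d2 w (x - y) = d2 w x - d2 w y" by (simp add: d2_def algebra_simps)

lemma mob_img: "mob M ` S = mobR (R M) ` S" by (simp add: mob_R)

lemma orient:
  fixes A B :: "int^2^2" and lam mu r q :: real and vinf v0 :: "real^2"
  assumes A: "SL2Z A" and B: "SL2Z B" and nc: "A ** B \<noteq> B ** A" and tB: "trace B > 2"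
    and lam: "lam \<ge> 1" and trA: "real_of_int (trace A) = lam + 1/lam"
    and mu: "mu > 1" and trB: "real_of_int (trace B) = mu + 1/mu" and A1: "A \<noteq> mat 1"
    and D: "d2 vinf v0 \<noteq> 0"
    and Av0: "R A *v v0 = (1/lam) *\<^sub>R v0" and Avi: "R A *v vinf = lam *\<^sub>R vinf + r *\<^sub>R v0"
    and Bvi: "R B *v vinf = (1/mu) *\<^sub>R vinf" and Bv0: "R B *v v0 = mu *\<^sub>R v0 + q *\<^sub>R vinf"
    and r: "r > 0" and q: "q \<noteq> 0" and wo: "well_oriented A B"
  shows "q > 0 \<and> q / (mu - 1/mu) > (lam - 1/lam) / r"
proof -
  define al where "al = (lam - 1/lam) / r"
  define be where "be = q / (mu - 1/mu)"
  define ea where "ea = al *\<^sub>R vinf + v0"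
  define eb where "eb = be *\<^sub>R vinf + v0"
  have l0: "lam \<noteq> 0" "lam > 0" using lam by auto
  have m0: "mu \<noteq> 0" "mu > 0" using mu by auto
  have mm: "mu - 1/mu > 0"
  proof -
    have "mu * mu > 1 * 1" using mu by (intro mult_strict_mono) auto
    then show ?thesis using m0 by (simp add: field_simps)
  qed
  have ll: "lam - 1/lam \<ge> 0"
  proof -
    have "lam * lam \<ge> 1 * 1" using lam by (intro mult_mono) auto
    then show ?thesis using l0 by (simp add: field_simps)
  qed
  have al0: "al \<ge> 0" using ll r by (simp add: al_def)
  have ral: "r * al = lam - 1/lam" using r by (simp add: al_def)
  have qbe: "q = be * (mu - 1/mu)" using mm by (simp add: be_def)
  have bsg: "be > 0 \<longleftrightarrow> q > 0" "be < 0 \<longleftrightarrow> q < 0" using mm by (simp_all add: be_def divide_pos_pos zero_less_divide_iff divide_less_0_iff)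
  have dA: "det (R A) \<noteq> 0" "det (R B) \<noteq> 0" "det (R (inv2 A)) \<noteq> 0" "det (R (inv2 B)) \<noteq> 0"
    using A B SL2Z_inv2 det_R1 by auto
  (* actions *)
  have eqc: "u = w \<longleftrightarrow> d2 u v0 = d2 w v0 \<and> d2 vinf u = d2 vinf w" for u w
    using coords[OF D, of u] coords[OF D, of w] by auto
  note lin = matrix_vector_right_distrib matrix_vector_mult_scaleR matrix_vector_mult_diff_distrib
  note dl = d2_add1 d2_add2 d2_scale1 d2_scale2 d2_self d2_anti[of v0 vinf] d2_neg1 d2_neg2 d2_diff1 d2_diff2
  have Aea: "R A *v ea = lam *\<^sub>R ea"
    unfolding eqc using l0 ral D
    by (simp only: ea_def lin Avi Av0 dl) (simp add: field_simps; algebra?)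
  have Aeb: "R A *v eb = (r * be) *\<^sub>R ea + (1/lam) *\<^sub>R eb"
    unfolding eqc using l0 ral D
    by (simp only: ea_def eb_def lin Avi Av0 dl) (simp add: field_simps; algebra?)
  have Avi': "R A *v vinf = r *\<^sub>R ea + (1/lam) *\<^sub>R vinf"
    unfolding eqc using l0 ral D
    by (simp only: ea_def lin Avi Av0 dl) (simp add: field_simps; algebra?)
  have Beb: "R B *v eb = mu *\<^sub>R eb"
    unfolding eqc using m0 qbe D
    by (simp only: eb_def lin Bvi Bv0 dl) (simp add: field_simps; algebra?)
  have Bea: "R B *v ea = (1/mu) *\<^sub>R ea + (mu - 1/mu) *\<^sub>R eb"
    unfolding eqc using m0 qbe D
    by (simp only: ea_def eb_def lin Bvi Bv0 dl) (simp add: field_simps; algebra?)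
  have Bv0': "R B *v v0 = (1/mu) *\<^sub>R v0 + (mu - 1/mu) *\<^sub>R eb"
    unfolding eqc using m0 qbe D
    by (simp only: eb_def lin Bvi Bv0 dl) (simp add: field_simps; algebra?)
  have iBvi: "R (inv2 B) *v vinf = mu *\<^sub>R vinf"
    by (rule inv2_from[OF B]) (simp add: algebra_simps Bvi m0 del: mv_nth)
  have iBea: "R (inv2 B) *v ea = (1/mu) *\<^sub>R ea + ((mu - 1/mu) * (al - be)) *\<^sub>R vinf"
    apply (rule inv2_from[OF B])
    unfolding eqc using m0 qbe D
    by (simp only: ea_def eb_def lin Bvi Bv0 dl) (simp add: field_simps; algebra?)
  have iAv0: "R (inv2 A) *v v0 = lam *\<^sub>R v0"
    by (rule inv2_from[OF A]) (simp add: algebra_simps Av0 l0 del: mv_nth)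
  have iAeb: "R (inv2 A) *v eb = (r * (al - be)) *\<^sub>R v0 + (1/lam) *\<^sub>R eb"
    apply (rule inv2_from[OF A])
    unfolding eqc using l0 ral D
    by (simp only: ea_def eb_def lin Avi Av0 dl) (simp add: field_simps; algebra?)
  (* nonzero and d2 facts *)
  have d2ab: "d2 ea eb = (al - be) * d2 vinf v0"
    by (simp add: ea_def eb_def d2_def algebra_simps)
  have d2av: "d2 ea vinf = - d2 vinf v0"
    by (simp add: ea_def d2_def algebra_simps)
  have d2vb: "d2 v0 eb = - be * d2 vinf v0"
    by (simp add: eb_def d2_def algebra_simps)
  have ea0: "ea \<noteq> 0" using d2av D by (auto simp: d2_def)
  have eb0: "eb \<noteq> 0"
  proof
    assume "eb = 0" then have "d2 vinf eb = 0" by (simp add: d2_def)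
    moreover have "d2 vinf eb = d2 vinf v0" by (simp add: eb_def d2_def algebra_simps)
    ultimately show False using D by simp
  qed
  have v00: "v0 \<noteq> 0" and vi0: "vinf \<noteq> 0" using D by (auto simp: d2_def)
  have B1: "B \<noteq> mat 1" using tB by (auto simp: trace2 mat1_nth)
  have attA: "att_fp A = pt ea" using att_gen[OF A lam trA A1 ea0 Aea] .
  have repA: "rep_fp A = pt v0" using rep_gen[OF A lam trA A1 v00 Av0] .
  have attB: "att_fp B = pt eb" using att_gen[OF B _ trB B1 eb0 Beb] mu by simp
  have repB: "rep_fp B = pt vinf" using rep_gen[OF B _ trB B1 vi0 Bvi] mu by simp
  have abne: "al \<noteq> be"
  proof
    assume "al = be"
    then have "eb = ea" by (simp add: ea_def eb_def)
    then have "R B *v ea = mu *\<^sub>R ea" using Beb by simp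
    then show False using common_eig[OF A B tB ea0 Aea, of mu] nc by simp
  qed
  have qpos: "q > 0"
  proof (rule ccontr)
    assume "\<not> q > 0"
    then have bneg: "be < 0" using q bsg by simp
    have D1: "d2 ea eb \<noteq> 0" using d2ab abne D by simp
    have D2: "d2 (-ea) eb \<noteq> 0" using D1 by (simp add: d2_neg1)
    have n1: "\<not> (mob A ` (pt ` kone ea eb) \<subseteq> pt ` kone ea eb)"
    proof -
      have "eb \<in> kone ea eb" unfolding kone_def by (rule CollectI, rule exI[of _ 0], rule exI[of _ 1]) simp
      moreover have "(r * be) * (1/lam) < 0" using r bneg l0 by (simp add: mult_pos_neg divide_neg_pos)
      ultimately show ?thesis using NONINV[OF D1 _ Aeb] by (simp add: mob_img)
    qed
    have n2: "\<not> (mob B ` (pt ` kone (-ea) eb) \<subseteq> pt ` kone (-ea) eb)"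
    proof -
      have "-ea \<in> kone (-ea) eb" unfolding kone_def by (rule CollectI, rule exI[of _ 1], rule exI[of _ 0]) simp
      moreover have "R B *v (-ea) = (1/mu) *\<^sub>R (-ea) + (-(mu - 1/mu)) *\<^sub>R eb"
      proof -
        have "R B *v (-ea) = - (R B *v ea)" by (simp add: v2_eq)
        then show ?thesis using Bea by (simp add: algebra_simps del: mv_nth)
      qed
      moreover have "(1/mu) * (-(mu - 1/mu)) < 0"
      proof (rule mult_pos_neg)
        show "0 < 1/mu" using m0 by simp
        show "-(mu - 1/mu) < 0" using mm by simp
      qed
      ultimately show ?thesis using NONINV[OF D2] by (simp add: mob_img)
    qed
    have "\<not> Iplus_exists A B"
    proof -
      have ne: "pt ea \<noteq> pt eb" using D1 ea0 eb0 by (simp add: pt_eq_iff)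
      have h: "\<not> invariant2 A B (pt ` kone ea eb)" "\<not> invariant2 A B (pt ` kone (-ea) eb)"
        using n1 n2 by (simp_all add: invariant2_def)
      from TWOARCS[OF D1] show ?thesis unfolding Iplus_exists_def attA attB
        using ne h by (elim disjE conjE) simp_all
    qed
    then show False using wo by (simp add: well_oriented_def coherently_oriented_def)
  qed
  have bpos: "be > 0" using qpos bsg by simp
  have "be > al"
  proof (rule ccontr)
    assume "\<not> be > al"
    then have ba: "be < al" using abne by simp
    have D3: "d2 ea vinf \<noteq> 0" using d2av D by simp
    have D4: "d2 v0 eb \<noteq> 0" using d2vb D bpos by simp
    have i1: "invariant2 A (inv2 B) (pt ` kone ea vinf)"
      unfolding invariant2_def mob_img
    proof
      show "mobR (R A) ` (pt ` kone ea vinf) \<subseteq> pt ` kone ea vinf"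
        by (rule INV[OF D3 dA(1), of lam 0 r "1/lam"]) (use Aea Avi' r l0 in simp_all)
      show "mobR (R (inv2 B)) ` (pt ` kone ea vinf) \<subseteq> pt ` kone ea vinf"
        by (rule INV[OF D3 dA(4), of "1/mu" "(mu - 1/mu) * (al - be)" 0 mu])
           (use iBea iBvi mm m0 ba in simp_all)
    qed
    have i2: "invariant2 (inv2 A) B (pt ` kone v0 eb)"
      unfolding invariant2_def mob_img
    proof
      show "mobR (R (inv2 A)) ` (pt ` kone v0 eb) \<subseteq> pt ` kone v0 eb"
        by (rule INV[OF D4 dA(3), of lam 0 "r * (al - be)" "1/lam"]) (use iAv0 iAeb r l0 ba in simp_all)
      show "mobR (R B) ` (pt ` kone v0 eb) \<subseteq> pt ` kone v0 eb"
        by (rule INV[OF D4 dA(2), of "1/mu" "mu - 1/mu" 0 mu]) (use Bv0' Beb mm m0 in simp_all)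
    qed
    have "Iplus_exists A (inv2 B)"
    proof -
      have "att_fp (inv2 B) = pt vinf" using repB by (simp add: rep_fp_def)
      then show ?thesis unfolding Iplus_exists_def attA
        using TWOARCS[OF D3] i1 by (auto simp: kone_sym)
    qed
    moreover have "Iminus_exists A (inv2 B)"
    proof -
      have "rep_fp (inv2 B) = pt eb" using attB by (simp add: rep_fp_def)
      then show ?thesis unfolding Iminus_exists_def repA
        using TWOARCS[OF D4] i2 by auto
    qed
    ultimately have "coherently_oriented A (inv2 B)" by (simp add: coherently_oriented_def)
    then show False using wo by (simp add: well_oriented_def)
  qed
  then show ?thesis using qpos by (simp add: al_def be_def)
qed



(* ---- from T4.thy ---- *)


definition mk :: "real \<Rightarrow> real \<Rightarrow> real \<Rightarrow> real \<Rightarrow> real^2^2" where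
  "mk a b c d = (\<chi> i j. if i = 1 then (if j = 1 then a else b) else (if j = 1 then c else d))"

lemma mk_nth[simp]: "mk a b c d $1$1 = a" "mk a b c d $1$2 = b" "mk a b c d $2$1 = c" "mk a b c d $2$2 = d"
  by (simp_all add: mk_def)

definition inCa :: "real \<Rightarrow> real^2 \<Rightarrow> bool" where "inCa al v \<longleftrightarrow> v$2 \<ge> 0 \<and> v$1 \<ge> al * v$2"
definition inCb :: "real \<Rightarrow> real^2 \<Rightarrow> bool" where "inCb be v \<longleftrightarrow> v$1 \<ge> 0 \<and> be * v$2 \<ge> v$1"
definition pres :: "(real^2 \<Rightarrow> bool) \<Rightarrow> real^2^2 \<Rightarrow> bool" where "pres S M \<longleftrightarrow> (\<forall>v. S v \<longrightarrow> S (M *v v))"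
definition nonneg :: "real^2^2 \<Rightarrow> bool" where
  "nonneg M \<longleftrightarrow> M$1$1 \<ge> 0 \<and> M$1$2 \<ge> 0 \<and> M$2$1 \<ge> 0 \<and> M$2$2 \<ge> 0"
definition Inv :: "real \<Rightarrow> real \<Rightarrow> real^2^2 \<Rightarrow> bool" where
  "Inv al be M \<longleftrightarrow> nonneg M \<and> det M = 1 \<and> pres (inCa al) M \<and> pres (inCb be) M"

lemma pres_mult: "pres S X \<Longrightarrow> pres S M \<Longrightarrow> pres S (X ** M)"
  by (simp add: pres_def matrix_vector_mul_assoc[symmetric] del: mv_nth)

lemma nonneg_mult: "nonneg X \<Longrightarrow> nonneg M \<Longrightarrow> nonneg (X ** M)"
  by (simp add: nonneg_def)

lemma Inv_mult: "Inv al be X \<Longrightarrow> Inv al be M \<Longrightarrow> Inv al be (X ** M)"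
  by (simp add: Inv_def pres_mult nonneg_mult det_mul)

lemma Inv_1: "Inv al be (mat 1)"
  by (simp add: Inv_def pres_def nonneg_def mat1_nth)

lemma Inv_pos:
  assumes "Inv al be M" shows "M$1$1 > 0" "M$2$2 > 0"
proof -
  have n: "nonneg M" and d: "M$1$1 * M$2$2 - M$1$2 * M$2$1 = 1" using assms by (simp_all add: Inv_def det_2)
  have "M$1$2 * M$2$1 \<ge> 0" using n by (simp add: nonneg_def)
  then have p: "M$1$1 * M$2$2 \<ge> 1" using d by simp
  then have "M$1$1 \<noteq> 0" "M$2$2 \<noteq> 0" by auto
  then show "M$1$1 > 0" "M$2$2 > 0" using n by (auto simp: nonneg_def)
qed

locale K =
  fixes lam mu r be :: real
  assumes lam: "lam \<ge> 1" and mu: "mu > 1" and r: "r > 0" and bepos: "be > 0"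
    and bal: "be > (lam - 1/lam) / r"
begin

definition al where "al = (lam - 1/lam) / r"
definition q where "q = be * (mu - 1/mu)"
definition Ap where "Ap = mk lam 0 r (1/lam)"
definition Bp where "Bp = mk (1/mu) q 0 mu"

lemma l0: "lam > 0" using lam by simp
lemma m0: "mu > 0" using mu by simp
lemma ral: "r * al = lam - 1/lam" using r by (simp add: al_def)
lemma al0: "al \<ge> 0"
proof -
  have "lam * lam \<ge> 1 * 1" using lam by (intro mult_mono) auto
  then have "lam - 1/lam \<ge> 0" using l0 by (simp add: field_simps)
  then show ?thesis using r by (simp add: al_def)
qed
lemma mm: "mu - 1/mu > 0"
proof -
  have "mu * mu > 1 * 1" using mu by (intro mult_strict_mono) auto
  then show ?thesis using m0 by (simp add: field_simps)
qed
lemma q0: "q > 0" using bepos mm by (simp add: q_def)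
lemma ba: "be > al" using bal by (simp add: al_def)

lemma Inv_Ap: "Inv al be Ap"
proof -
  have nn: "nonneg Ap" using l0 r by (simp add: Ap_def nonneg_def)
  have dt: "det Ap = 1" using l0 by (simp add: Ap_def det_2)
  have pa: "pres (inCa al) Ap"
    unfolding pres_def
  proof (intro allI impI)
    fix v assume v: "inCa al v"
    then have v2: "v$2 \<ge> 0" and v1: "v$1 - al * v$2 \<ge> 0" by (simp_all add: inCa_def)
    have "v$1 \<ge> 0" using v1 v2 al0 by (meson diff_ge_0_iff_ge mult_nonneg_nonneg order_trans)
    then have a: "r * v$1 + v$2 / lam \<ge> 0" using r v2 l0 by simp
    have "lam * v$1 - al * (r * v$1 + v$2 / lam) = (v$1 - al * v$2) / lam"
      using l0 ral by (simp add: field_simps; algebra?)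
    then have "lam * v$1 - al * (r * v$1 + v$2 / lam) \<ge> 0" using v1 l0 by simp
    then show "inCa al (Ap *v v)" using a by (simp add: inCa_def Ap_def algebra_simps)
  qed
  have pb: "pres (inCb be) Ap"
    unfolding pres_def
  proof (intro allI impI)
    fix v assume v: "inCb be v"
    then have v1: "v$1 \<ge> 0" and v2: "be * v$2 - v$1 \<ge> 0" by (simp_all add: inCb_def)
    have "be * (r * v$1 + v$2 / lam) - lam * v$1 = r * (be - al) * v$1 + (be * v$2 - v$1) / lam"
      using l0 ral by (simp add: field_simps; algebra?)
    moreover have "r * (be - al) * v$1 \<ge> 0" using r ba v1 by simp
    moreover have "(be * v$2 - v$1) / lam \<ge> 0" using v2 l0 by simp
    ultimately have "be * (r * v$1 + v$2 / lam) - lam * v$1 \<ge> 0" by linarith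
    then show "inCb be (Ap *v v)" using v1 l0 by (simp add: inCb_def Ap_def algebra_simps)
  qed
  show ?thesis using nn dt pa pb by (simp add: Inv_def)
qed

lemma Inv_Bp: "Inv al be Bp"
proof -
  have nn: "nonneg Bp" using m0 q0 by (simp add: Bp_def nonneg_def)
  have dt: "det Bp = 1" using m0 by (simp add: Bp_def det_2)
  have pa: "pres (inCa al) Bp"
    unfolding pres_def
  proof (intro allI impI)
    fix v assume v: "inCa al v"
    then have v2: "v$2 \<ge> 0" and v1: "v$1 - al * v$2 \<ge> 0" by (simp_all add: inCa_def)
    have "v$1 / mu + q * v$2 - al * (mu * v$2) = (v$1 - al * v$2) / mu + (mu - 1/mu) * (be - al) * v$2"
      using m0 by (simp add: q_def field_simps; algebra?)
    moreover have "(mu - 1/mu) * (be - al) * v$2 \<ge> 0" using mm ba v2 by simp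
    moreover have "(v$1 - al * v$2) / mu \<ge> 0" using v1 m0 by simp
    ultimately have "v$1 / mu + q * v$2 - al * (mu * v$2) \<ge> 0" by linarith
    then show "inCa al (Bp *v v)" using v2 m0 by (simp add: inCa_def Bp_def algebra_simps)
  qed
  have pb: "pres (inCb be) Bp"
    unfolding pres_def
  proof (intro allI impI)
    fix v assume v: "inCb be v"
    then have v1: "v$1 \<ge> 0" and v2: "be * v$2 - v$1 \<ge> 0" by (simp_all add: inCb_def)
    have "be * v$2 \<ge> 0" using v1 v2 by simp
    then have v2p: "v$2 \<ge> 0" using bepos by (simp add: zero_le_mult_iff)
    have "be * (mu * v$2) - (v$1 / mu + q * v$2) = (be * v$2 - v$1) / mu"
      using m0 by (simp add: q_def field_simps; algebra?)
    then have "be * (mu * v$2) - (v$1 / mu + q * v$2) \<ge> 0" using v2 m0 by simp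
    moreover have "v$1 / mu + q * v$2 \<ge> 0" using v1 v2p m0 q0 by simp
    ultimately show "inCb be (Bp *v v)" by (simp add: inCb_def Bp_def algebra_simps)
  qed
  show ?thesis using nn dt pa pb by (simp add: Inv_def)
qed

lemma TRA:
  assumes "Inv al be M"
  shows "(lam + 1) * (trace (Ap ** M) - trace M) \<ge> (lam + 1) * (lam + 1/lam - 2) * M$1$1 + r * lam * M$1$2"
proof -
  have n: "nonneg M" and p: "pres (inCa al) M" using assms by (simp_all add: Inv_def)
  have "inCa al (vec2 al 1)" by (simp add: inCa_def)
  then have "inCa al (M *v vec2 al 1)" using p by (simp add: pres_def)
  then have L: "M$1$1 * al + M$1$2 - al * (M$2$1 * al + M$2$2) \<ge> 0" by (simp add: inCa_def)
  have id: "(lam + 1) * (trace (Ap ** M) - trace M) = (lam + 1) * (lam + 1/lam - 2) * M$1$1 + r * lam * M$1$2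
        + r * ((M$1$1 * al + M$1$2 - al * (M$2$1 * al + M$2$2)) + al * al * M$2$1)"
    using l0 ral by (simp add: Ap_def trace2 field_simps; algebra?)
  have "r * ((M$1$1 * al + M$1$2 - al * (M$2$1 * al + M$2$2)) + al * al * M$2$1) \<ge> 0"
    using L n r al0 by (intro mult_nonneg_nonneg add_nonneg_nonneg) (simp_all add: nonneg_def)
  then show ?thesis using id by linarith
qed

lemma TRB:
  assumes "Inv al be M"
  shows "be * (mu + 1) * (trace (Bp ** M) - trace M) \<ge> be * (mu + 1) * (mu + 1/mu - 2) * M$2$2 + be * q * mu * M$2$1"
proof -
  have n: "nonneg M" and p: "pres (inCb be) M" using assms by (simp_all add: Inv_def)
  have "inCb be (vec2 be 1)" using bepos by (simp add: inCb_def)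
  then have "inCb be (M *v vec2 be 1)" using p by (simp add: pres_def)
  then have L: "be * (M$2$1 * be + M$2$2) - (M$1$1 * be + M$1$2) \<ge> 0" by (simp add: inCb_def)
  have id: "be * (mu + 1) * (trace (Bp ** M) - trace M) = be * (mu + 1) * (mu + 1/mu - 2) * M$2$2 + be * q * mu * M$2$1
        + (mu - 1/mu) * ((be * (M$2$1 * be + M$2$2) - (M$1$1 * be + M$1$2)) + M$1$2)"
    using m0 by (simp add: Bp_def trace2 q_def field_simps; algebra?)
  have "(mu - 1/mu) * ((be * (M$2$1 * be + M$2$2) - (M$1$1 * be + M$1$2)) + M$1$2) \<ge> 0"
    using L n mm by (intro mult_nonneg_nonneg add_nonneg_nonneg) (simp_all add: nonneg_def)
  then show ?thesis using id by linarith
qed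

lemma lam2: "lam + 1/lam - 2 \<ge> 0" "lam > 1 \<Longrightarrow> lam + 1/lam - 2 > 0"
proof -
  have "(lam - 1) * (lam - 1) \<ge> 0" by simp
  then have "lam * lam + 1 \<ge> 2 * lam" by (simp add: algebra_simps)
  then show "lam + 1/lam - 2 \<ge> 0" using l0 by (simp add: field_simps)
  assume "lam > 1"
  then have "(lam - 1) * (lam - 1) > 0" by simp
  then have "lam * lam + 1 > 2 * lam" by (simp add: algebra_simps)
  then show "lam + 1/lam - 2 > 0" using l0 by (simp add: field_simps)
qed

lemma mu2: "mu + 1/mu - 2 > 0"
proof -
  have "(mu - 1) * (mu - 1) > 0" using mu by simp
  then have "mu * mu + 1 > 2 * mu" by (simp add: algebra_simps)
  then show ?thesis using m0 by (simp add: field_simps)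
qed

lemma stepA:
  assumes "Inv al be M"
  shows "trace (Ap ** M) \<ge> trace M"
    and "lam > 1 \<or> M$1$2 > 0 \<Longrightarrow> trace (Ap ** M) > trace M"
proof -
  have n: "M$1$1 > 0" "M$1$2 \<ge> 0" using assms Inv_pos by (auto simp: Inv_def nonneg_def)
  have t: "(lam + 1) * (trace (Ap ** M) - trace M) \<ge> (lam + 1) * (lam + 1/lam - 2) * M$1$1 + r * lam * M$1$2"
    using TRA[OF assms] .
  have a: "(lam + 1) * (lam + 1/lam - 2) * M$1$1 \<ge> 0" using lam2(1) n l0 by simp
  have b: "r * lam * M$1$2 \<ge> 0" using r l0 n by simp
  have lp: "lam + 1 > 0" using l0 by simp
  have "(lam + 1) * (trace (Ap ** M) - trace M) \<ge> 0" using t a b by linarith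
  then show "trace (Ap ** M) \<ge> trace M" using lp by (simp add: zero_le_mult_iff)
  assume h: "lam > 1 \<or> M$1$2 > 0"
  have "(lam + 1) * (lam + 1/lam - 2) * M$1$1 + r * lam * M$1$2 > 0"
  proof (cases "lam > 1")
    case True
    then have "(lam + 1) * (lam + 1/lam - 2) * M$1$1 > 0" using lam2(2) n lp by simp
    then show ?thesis using b by linarith
  next
    case False
    then have "M$1$2 > 0" using h by simp
    then have "r * lam * M$1$2 > 0" using r l0 by simp
    then show ?thesis using a by linarith
  qed
  then have "(lam + 1) * (trace (Ap ** M) - trace M) > 0" using t by linarith
  then show "trace (Ap ** M) > trace M" using lp by (simp add: zero_less_mult_iff)
qed

lemma stepB:
  assumes "Inv al be M"
  shows "trace (Bp ** M) > trace M"
proof -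
  have n: "M$2$2 > 0" "M$2$1 \<ge> 0" using assms Inv_pos by (auto simp: Inv_def nonneg_def)
  have t: "be * (mu + 1) * (trace (Bp ** M) - trace M) \<ge> be * (mu + 1) * (mu + 1/mu - 2) * M$2$2 + be * q * mu * M$2$1"
    using TRB[OF assms] .
  have bp: "be * (mu + 1) > 0" using bepos m0 by simp
  have "be * (mu + 1) * (mu + 1/mu - 2) * M$2$2 > 0" using bp mu2 n by simp
  moreover have "be * q * mu * M$2$1 \<ge> 0" using bepos q0 m0 n by simp
  ultimately have "be * (mu + 1) * (trace (Bp ** M) - trace M) > 0" using t by linarith
  then show ?thesis using bp by (simp add: zero_less_mult_iff)
qed

end



(* ---- from T5a.thy ---- *)


section \<open>Words\<close>

lemma phi_Nil[simp]: "phi A B [] = mat 1" by (simp add: phi_def)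
lemma phi_Cons[simp]: "phi A B (l # w) = letter_mat A B l ** phi A B w" by (simp add: phi_def)
lemma phi_append: "phi A B (u @ v) = phi A B u ** phi A B v"
  by (induction u) (simp_all add: matrix_mul_assoc)

lemma trw_rot: "trw A B (p @ x # s) = trw A B (x # (s @ p))"
proof -
  have "trw A B (p @ x # s) = trace (phi A B p ** (letter_mat A B x ** phi A B s))"
    by (simp add: trw_def phi_append)
  also have "\<dots> = trace ((letter_mat A B x ** phi A B s) ** phi A B p)" by (rule trace_mul_sym)
  also have "\<dots> = trw A B (x # (s @ p))" by (simp add: trw_def phi_append matrix_mul_assoc)
  finally show ?thesis .
qed

lemma trw_rot0: "trw A B (p @ s) = trw A B (s @ p)"
  unfolding trw_def phi_append by (rule trace_mul_sym)

lemma decomp: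
  "subseq u w \<Longrightarrow> u \<noteq> w \<Longrightarrow> \<exists>p x s. w = p @ x # s \<and> subseq u (p @ s)"
proof (induction u w rule: list_emb.induct)
  case (list_emb_Nil ys)
  then obtain y ys' where "ys = y # ys'" by (cases ys) auto
  then show ?case by (intro exI[of _ "[]"]) auto
next
  case (list_emb_Cons xs ys y)
  then show ?case by (intro exI[of _ "[]"]) auto
next
  case (list_emb_Cons2 x y xs ys)
  then have "xs \<noteq> ys" by auto
  then obtain p z s where "ys = p @ z # s" "subseq xs (p @ s)" using list_emb_Cons2 by blast
  then show ?case using list_emb_Cons2 by (intro exI[of _ "y # p"] exI[of _ z] exI[of _ s]) auto
qed

lemma weak_gen:
  assumes step: "\<And>p x s. trw A B (p @ s) \<le> trw A B (p @ x # s)"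
  shows "subseq u w \<Longrightarrow> trw A B u \<le> trw A B w"
proof (induction "length w" arbitrary: w rule: less_induct)
  case less
  show ?case
  proof (cases "u = w")
    case True then show ?thesis by simp
  next
    case False
    then obtain p x s where w: "w = p @ x # s" and us: "subseq u (p @ s)" using decomp less.prems by blast
    have "trw A B u \<le> trw A B (p @ s)" using less.hyps[of "p @ s"] us w by simp
    also have "\<dots> \<le> trw A B w" using step w by simp
    finally show ?thesis .
  qed
qed



(* ---- from T5b.thy ---- *)

section \<open>Conjugation\<close>

definition Pm :: "real^2 \<Rightarrow> real^2 \<Rightarrow> real^2^2" where "Pm vi v0 = mk (vi$1) (v0$1) (vi$2) (v0$2)"
definition Qm :: "real^2 \<Rightarrow> real^2 \<Rightarrow> real^2^2" where
  "Qm vi v0 = mk (v0$2 / d2 vi v0) (- v0$1 / d2 vi v0) (- vi$2 / d2 vi v0) (vi$1 / d2 vi v0)"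

lemma QP: "d2 vi v0 \<noteq> 0 \<Longrightarrow> Qm vi v0 ** Pm vi v0 = mat 1"
  by (simp add: m2_eq Pm_def Qm_def mat1_nth field_simps) (simp_all add: d2_def algebra_simps)

lemma PQ: "d2 vi v0 \<noteq> 0 \<Longrightarrow> Pm vi v0 ** Qm vi v0 = mat 1"
  by (simp add: m2_eq Pm_def Qm_def mat1_nth field_simps) (simp_all add: d2_def algebra_simps)

definition cnjm where "cnjm vi v0 X = Qm vi v0 ** X ** Pm vi v0"

lemma cnj_mult: "d2 vi v0 \<noteq> 0 \<Longrightarrow> cnjm vi v0 (X ** Y) = cnjm vi v0 X ** cnjm vi v0 Y"
proof -
  assume D: "d2 vi v0 \<noteq> 0"
  have "cnjm vi v0 X ** cnjm vi v0 Y = Qm vi v0 ** X ** (Pm vi v0 ** Qm vi v0) ** Y ** Pm vi v0"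
    by (simp add: cnjm_def matrix_mul_assoc)
  also have "\<dots> = cnjm vi v0 (X ** Y)" by (simp add: PQ[OF D] cnjm_def matrix_mul_assoc)
  finally show ?thesis by simp
qed

lemma cnj_1: "d2 vi v0 \<noteq> 0 \<Longrightarrow> cnjm vi v0 (mat 1) = mat 1"
  by (simp add: cnjm_def QP)

lemma trace_cnj: "d2 vi v0 \<noteq> 0 \<Longrightarrow> trace (cnjm vi v0 X) = trace X"
proof -
  assume D: "d2 vi v0 \<noteq> 0"
  have "trace (cnjm vi v0 X) = trace ((Qm vi v0 ** X) ** Pm vi v0)" by (simp add: cnjm_def)
  also have "\<dots> = trace (Pm vi v0 ** (Qm vi v0 ** X))" by (rule trace_mul_sym)
  also have "\<dots> = trace X" by (simp add: matrix_mul_assoc PQ[OF D])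
  finally show ?thesis .
qed

lemma cnj_col: "cnjm vi v0 X = mk ((Qm vi v0 *v (X *v vi))$1) ((Qm vi v0 *v (X *v v0))$1)
                                 ((Qm vi v0 *v (X *v vi))$2) ((Qm vi v0 *v (X *v v0))$2)"
  by (simp add: m2_eq cnjm_def Pm_def algebra_simps)

lemma Q_vi: "d2 vi v0 \<noteq> 0 \<Longrightarrow> Qm vi v0 *v vi = vec2 1 0"
  by (simp add: v2_eq Qm_def field_simps) (simp_all add: d2_def algebra_simps)
lemma Q_v0: "d2 vi v0 \<noteq> 0 \<Longrightarrow> Qm vi v0 *v v0 = vec2 0 1"
  by (simp add: v2_eq Qm_def field_simps) (simp_all add: d2_def algebra_simps)

lemma cnj_form:
  assumes D: "d2 vi v0 \<noteq> 0" and h1: "X *v vi = a *\<^sub>R vi + c *\<^sub>R v0" and h2: "X *v v0 = b *\<^sub>R vi + d *\<^sub>R v0"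
  shows "cnjm vi v0 X = mk a b c d"
proof -
  have "Qm vi v0 *v (X *v vi) = a *\<^sub>R (Qm vi v0 *v vi) + c *\<^sub>R (Qm vi v0 *v v0)"
    by (simp add: h1 algebra_simps del: mv_nth)
  then have 1: "Qm vi v0 *v (X *v vi) = vec2 a c" by (simp add: Q_vi[OF D] Q_v0[OF D] v2_eq)
  have "Qm vi v0 *v (X *v v0) = b *\<^sub>R (Qm vi v0 *v vi) + d *\<^sub>R (Qm vi v0 *v v0)"
    by (simp add: h2 algebra_simps del: mv_nth)
  then have 2: "Qm vi v0 *v (X *v v0) = vec2 b d" by (simp add: Q_vi[OF D] Q_v0[OF D] v2_eq)
  show ?thesis by (simp only: cnj_col 1 2 vec2_nth)
qed



(* ---- from T6.thy ---- *)


lemma R_1: "R (mat 1) = mat 1" by (simp add: m2_eq mat1_nth)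

lemma letter_cases: "letter_mat A B l = A \<or> letter_mat A B l = B"
  by (cases l) (simp_all add: letter_mat_def)

lemma KEY:
  fixes A B :: "int^2^2"
  assumes A: "SL2Z A" and B: "SL2Z B" and nc: "A ** B \<noteq> B ** A" and wo: "well_oriented A B"
    and tA: "2 \<le> trace A" and tAB: "trace A < trace B"
  shows "trw A B m \<le> trw A B (x # m) \<and>
         (\<not> (x = La \<and> trace A = 2 \<and> Lb \<notin> set m) \<longrightarrow> trw A B m < trw A B (x # m))"
proof -
  have tB: "trace B > 2" using tA tAB by simp
  obtain lam where lam: "lam \<ge> 1" "lam + 1/lam = real_of_int (trace A)" "real_of_int (trace A) > 2 \<longrightarrow> lam > 1"
    using lam_ex[of "real_of_int (trace A)"] tA by auto
  obtain mu where mu0: "mu \<ge> 1" "mu + 1/mu = real_of_int (trace B)" "real_of_int (trace B) > 2 \<longrightarrow> mu > 1"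
    using lam_ex[of "real_of_int (trace B)"] tB by auto
  have mu: "mu > 1" using mu0(3) tB by simp
  have A1: "A \<noteq> mat 1" using nc by auto
  have B1: "B \<noteq> mat 1" using nc by auto
  have RA1: "R A \<noteq> mat 1" using A1 R_eq1 by blast
  have RB1: "R B \<noteq> mat 1" using B1 R_eq1 by blast
  obtain a0 where a0: "a0 \<noteq> 0" "R A *v a0 = (1/lam) *\<^sub>R a0"
    using eig_ex[OF det_R1[OF A] _ lam(1) RA1] lam(2) by (auto simp: trace_R)
  obtain b0 where b0: "b0 \<noteq> 0" "R B *v b0 = (1/mu) *\<^sub>R b0"
    using eig_ex[OF det_R1[OF B] _ _ RB1, of mu] mu0(2) mu by (auto simp: trace_R)
  have l0: "lam > 0" using lam by simp
  have m0: "mu > 0" using mu by simp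
  define D where "D = d2 b0 a0"
  have D: "D \<noteq> 0"
  proof
    assume "D = 0"
    then obtain k where k: "a0 = k *\<^sub>R b0" using parallel[OF b0(1)] by (auto simp: D_def)
    have "R B *v a0 = (1/mu) *\<^sub>R a0" using b0(2) by (simp add: k algebra_simps del: mv_nth)
    then show False using common_eig[OF A B tB a0(1) a0(2)] nc by blast
  qed
  define r0 where "r0 = d2 b0 (R A *v b0) / D"
  define q0 where "q0 = d2 (R B *v a0) a0 / D"
  have Ab0: "R A *v b0 = lam *\<^sub>R b0 + r0 *\<^sub>R a0"
  proof -
    have "d2 (R A *v b0) (R A *v a0) = D" using d2_mv[of "R A" b0 a0] det_R1[OF A] by (simp add: D_def)
    then have "(1/lam) * d2 (R A *v b0) a0 = D" using a0(2) by (simp add: d2_scale2)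
    then have "d2 (R A *v b0) a0 / D = lam" using D l0 by (simp add: field_simps)
    then show ?thesis using coords[of b0 a0 "R A *v b0"] D by (simp add: D_def r0_def)
  qed
  have Ba0: "R B *v a0 = mu *\<^sub>R a0 + q0 *\<^sub>R b0"
  proof -
    have "d2 (R B *v b0) (R B *v a0) = D" using d2_mv[of "R B" b0 a0] det_R1[OF B] by (simp add: D_def)
    then have "(1/mu) * d2 b0 (R B *v a0) = D" using b0(2) by (simp add: d2_scale1)
    then have "d2 b0 (R B *v a0) / D = mu" using D m0 by (simp add: field_simps)
    then show ?thesis using coords[of b0 a0 "R B *v a0"] D by (simp add: D_def q0_def add.commute)
  qed
  have r0: "r0 \<noteq> 0"
  proof
    assume "r0 = 0"
    then have "R A *v b0 = lam *\<^sub>R b0" using Ab0 by simp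
    then show False using common_eig[OF A B tB b0(1) _ b0(2)] nc by blast
  qed
  have q0: "q0 \<noteq> 0"
  proof
    assume "q0 = 0"
    then have "R B *v a0 = mu *\<^sub>R a0" using Ba0 by simp
    then show False using common_eig[OF A B tB a0(1) a0(2)] nc by blast
  qed
  define s where "s = (if r0 > 0 then 1 else -1 :: real)"
  have s: "s * s = 1" "s \<noteq> 0" by (simp_all add: s_def)
  define vi where "vi = s *\<^sub>R b0"
  define rr where "rr = s * r0"
  define qq where "qq = s * q0"
  have rr: "rr > 0" using r0 by (simp add: rr_def s_def)
  have qq: "qq \<noteq> 0" using q0 s by (simp add: qq_def)
  have Dv: "d2 vi a0 \<noteq> 0" using D s by (simp add: vi_def d2_scale1 D_def)
  have Avi: "R A *v vi = lam *\<^sub>R vi + rr *\<^sub>R a0"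
    using Ab0 by (simp add: vi_def rr_def algebra_simps del: mv_nth)
  have Bvi: "R B *v vi = (1/mu) *\<^sub>R vi"
    using b0(2) by (simp add: vi_def algebra_simps del: mv_nth)
  have Bv0: "R B *v a0 = mu *\<^sub>R a0 + qq *\<^sub>R vi"
    using Ba0 s by (simp add: vi_def qq_def algebra_simps del: mv_nth)
  have trA: "real_of_int (trace A) = lam + 1/lam" using lam(2) by simp
  have trB: "real_of_int (trace B) = mu + 1/mu" using mu0(2) by simp
  have ori: "qq > 0 \<and> qq / (mu - 1/mu) > (lam - 1/lam) / rr"
    using orient[OF A B nc tB lam(1) trA mu trB A1 Dv a0(2) Avi Bvi Bv0 rr qq wo] .
  define be where "be = qq / (mu - 1/mu)"
  have mm: "mu - 1/mu > 0"
  proof -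
    have "mu * mu > 1 * 1" using mu by (intro mult_strict_mono) auto
    then show ?thesis using m0 by (simp add: field_simps)
  qed
  have bepos: "be > 0" using ori mm by (simp add: be_def)
  interpret Kx: K lam mu rr be
    using lam(1) mu rr bepos ori by (unfold_locales) (simp_all add: be_def)
  have qeq: "Kx.q = qq"
  proof -
    have "Kx.q = be * (mu - 1/mu)" by (rule Kx.q_def)
    also have "\<dots> = qq" using mm by (simp add: be_def)
    finally show ?thesis .
  qed
  have cA: "cnjm vi a0 (R A) = Kx.Ap"
    unfolding Kx.Ap_def by (rule cnj_form[OF Dv]) (simp_all add: Avi a0(2))
  have cB: "cnjm vi a0 (R B) = Kx.Bp"
    unfolding Kx.Bp_def qeq by (rule cnj_form[OF Dv]) (simp_all add: Bvi Bv0 add.commute)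
  have inv: "Inv Kx.al be (cnjm vi a0 (R (phi A B w))) \<and>
             (Lb \<in> set w \<longrightarrow> cnjm vi a0 (R (phi A B w)) $1$2 > 0)" for w
  proof (induction w)
    case Nil
    then show ?case using Inv_1 by (simp add: R_1 cnj_1[OF Dv])
  next
    case (Cons l w)
    define M where "M = cnjm vi a0 (R (phi A B w))"
    have eq: "cnjm vi a0 (R (phi A B (l # w))) = cnjm vi a0 (R (letter_mat A B l)) ** M"
      by (simp add: M_def R_mult cnj_mult[OF Dv])
    have IM: "Inv Kx.al be M" using Cons by (simp add: M_def)
    have pos: "M$2$2 > 0" using Inv_pos[OF IM] by simp
    have nnM: "M$1$2 \<ge> 0" using IM by (simp add: Inv_def nonneg_def)
    show ?case
    proof (cases l)
      case La
      then have X: "cnjm vi a0 (R (letter_mat A B l)) = Kx.Ap" using cA by (simp add: letter_mat_def)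
      have "Inv Kx.al be (Kx.Ap ** M)" using Inv_mult[OF Kx.Inv_Ap IM] .
      moreover have "Lb \<in> set (l # w) \<longrightarrow> (Kx.Ap ** M)$1$2 > 0"
        using Cons La l0 by (simp add: Kx.Ap_def M_def)
      ultimately show ?thesis using eq X by simp
    next
      case Lb
      then have X: "cnjm vi a0 (R (letter_mat A B l)) = Kx.Bp" using cB by (simp add: letter_mat_def)
      have "Inv Kx.al be (Kx.Bp ** M)" using Inv_mult[OF Kx.Inv_Bp IM] .
      moreover have "(Kx.Bp ** M)$1$2 > 0"
      proof -
        have "(Kx.Bp ** M)$1$2 = (1/mu) * M$1$2 + Kx.q * M$2$2" by (simp add: Kx.Bp_def)
        moreover have "(1/mu) * M$1$2 \<ge> 0" using nnM m0 by simp
        moreover have "Kx.q * M$2$2 > 0" using Kx.q0 pos by simp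
        ultimately show ?thesis by linarith
      qed
      ultimately show ?thesis using eq X by simp
    qed
  qed
  define M where "M = cnjm vi a0 (R (phi A B m))"
  have IM: "Inv Kx.al be M" using inv by (simp add: M_def)
  have tm: "real_of_int (trw A B m) = trace M"
    by (simp add: M_def trw_def trace_cnj[OF Dv] trace_R)
  have tx: "real_of_int (trw A B (x # m)) = trace (cnjm vi a0 (R (letter_mat A B x)) ** M)"
  proof -
    have "real_of_int (trw A B (x # m)) = trace (cnjm vi a0 (R (phi A B (x # m))))"
      by (simp add: trw_def trace_cnj[OF Dv] trace_R)
    also have "\<dots> = trace (cnjm vi a0 (R (letter_mat A B x)) ** M)"
      by (simp add: M_def R_mult cnj_mult[OF Dv])
    finally show ?thesis .
  qed
  show ?thesis
  proof (cases x)
    case La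
    then have tx': "real_of_int (trw A B (x # m)) = trace (Kx.Ap ** M)" using tx cA by (simp add: letter_mat_def)
    have ge: "trw A B m \<le> trw A B (x # m)" using Kx.stepA(1)[OF IM] tx' tm by simp
    have "\<not> (x = La \<and> trace A = 2 \<and> Lb \<notin> set m) \<longrightarrow> trw A B m < trw A B (x # m)"
    proof
      assume h: "\<not> (x = La \<and> trace A = 2 \<and> Lb \<notin> set m)"
      have "lam > 1 \<or> M$1$2 > 0"
      proof (cases "trace A = 2")
        case True
        then have "Lb \<in> set m" using h La by simp
        then show ?thesis using inv[of m] by (simp add: M_def)
      next
        case False
        then have "real_of_int (trace A) > 2" using tA by simp
        then show ?thesis using lam(3) by simp
      qed
      then show "trw A B m < trw A B (x # m)" using Kx.stepA(2)[OF IM] tx' tm by simp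
    qed
    then show ?thesis using ge by simp
  next
    case Lb
    then have tx': "real_of_int (trw A B (x # m)) = trace (Kx.Bp ** M)" using tx cB by (simp add: letter_mat_def)
    then show ?thesis using Kx.stepB[OF IM] tm by simp
  qed
qed

lemma all_La: "Lb \<notin> set w \<Longrightarrow> w = replicate (length w) La"
proof (induction w)
  case (Cons a w)
  then show ?case by (cases a) auto
qed simp

theorem lemma5p2:
  fixes A B :: "int^2^2"
  assumes "SL2Z A" and "SL2Z B"
    and "A ** B \<noteq> B ** A"
    and "well_oriented A B"
    and "2 \<le> trace A" and "trace A < trace B"
  shows "(\<forall>w u. (trw A B w < trw A B u \<longleftrightarrow> trw A B w \<le> trw A B u - 1)) \<and>
         (\<forall>w u. strict_subseq u w \<longrightarrow>
           \<not> (parabolic A \<and> (\<exists>n. w = replicate n La)) \<longrightarrow> trw A B u < trw A B w)"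
proof -
  note key = KEY[OF assms]
  have part1: "\<forall>w u. (trw A B w < trw A B u \<longleftrightarrow> trw A B w \<le> trw A B u - 1)" by auto
  have step: "trw A B (p @ s) \<le> trw A B (p @ x # s)" for p x s
    using key[of "s @ p" x] by (simp add: trw_rot trw_rot0[of A B p s])
  have part2: "trw A B u < trw A B w"
    if su: "strict_subseq u w" and ne: "\<not> (parabolic A \<and> (\<exists>n. w = replicate n La))" for u w
  proof -
    have sub: "subseq u w" and une: "u \<noteq> w" using su by (auto simp: strict_subseq_def)
    obtain p x s where w: "w = p @ x # s" and us: "subseq u (p @ s)" using decomp[OF sub une] by blast
    have "trw A B u \<le> trw A B (p @ s)" using weak_gen[OF step us] .
    moreover have "trw A B (p @ s) < trw A B (p @ x # s)"
    proof -
      have "\<not> (x = La \<and> trace A = 2 \<and> Lb \<notin> set (s @ p))"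
      proof
        assume h: "x = La \<and> trace A = 2 \<and> Lb \<notin> set (s @ p)"
        then have "Lb \<notin> set w" using w by auto
        then have "w = replicate (length w) La" by (rule all_La)
        moreover have "parabolic A" using h by (simp add: parabolic_def)
        ultimately show False using ne by blast
      qed
      then show ?thesis using key[of "s @ p" x] by (simp add: trw_rot trw_rot0[of A B p s])
    qed
    ultimately show ?thesis using w by simp
  qed
  show ?thesis using part1 part2 by blast
qed


end
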